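(* Consider a system whose communication graph $G$ is a simple cycle, and let $a$ and $b$ be its two rings. Let $N(a)$ and $N(b)$ be the numbers of robots in $a$ and $b$, respectively, in a synchronized communication system on $G$ (before any robot leaves). Then the starvation-number of $G$ is $\max\{N(a),N(b)\}$.
   Context: Model. A system consists of pairwise disjoint unit circles $C_1,\dots,C_n$ in the plane (trajectories) and a communication range $r>0$. Its communication graph $G$ has vertex set $\{C_1,\dots,C_n\}$, $C_i,C_j$ adjacent iff the distance between their centres is at most $2+r$. Positions on a circle are angles (mod $2\pi$). For an edge $(i,j)$, the link position $\phi_{ij}$ is the angle of the point of $C_i$ closest to $C_j$. A schedule $F=(f,g)$ assigns each circle a starting angle $f(C_i)$ and direction $g(C_i)\in\{1,-1\}$; a robot following it on $C_i$ is at $f(C_i)+g(C_i)2\pi t$ at time $t$. $F$ is a synchronization schedule if $g(C_i)=-g(C_j)$ for adjacent circles and robots following $F$ on adjacent $C_i,C_j$ are at $\phi_{ij},\phi_{ji}$ at exactly the same times. A synchronized communication system (SCS) on $G$ consists of $n$ robots, initially one per circle, following a synchronization schedule, with the switching rule: when a robot on $C_i$ reaches $\phi_{ij}$ and $C_j$ is empty, it instantly passes to $C_j$ and follows the schedule of $C_j$; if $C_j$ has a robot, they meet and each stays on its circle. A partial SCS arises by letting some robots leave (possibly at different times). A surviving robot $u$ starves if every time $u$ arrives at a link position $\phi_{ij}$ of its current circle $C_i$, the circle $C_j$ is empty. The starvation-number of $G$ is the maximum possible number of starving robots in a (partial) SCS on $G$. Rings. Given the directions $g$, trace a point moving along a circle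 $C_i$ in direction $g(C_i)$; whenever it reaches a link position $\phi_{ij}$ of its current circle, it passes to $C_j$ at $\phi_{ji}$ and continues in direction $g(C_j)$. The closed curve traced is a ring; the circles decompose into rings overlapping only at link positions. A robot is in a ring if it lies on a point of it. When $G$ is a cycle there are exactly two rings. *)

theory Defs
  imports "HOL-Analysis.Analysis"
begin

text \<open>Circles C_0,...,C_(n-1): unit circles with centres c i (complex plane).
  Angles (mod 2 pi) are represented by the unit complex number cis of the angle.\<close>

definition adj :: "nat \<Rightarrow> (nat \<Rightarrow> complex) \<Rightarrow> real \<Rightarrow> nat \<Rightarrow> nat \<Rightarrow> bool" where
  "adj n c r i j \<longleftrightarrow> i < n \<and> j < n \<and> i \<noteq> j \<and> dist (c i) (c j) \<le> 2 + r"

definition disjoint_circles :: "nat \<Rightarrow> (nat \<Rightarrow> complex) \<Rightarrow> bool" where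
  "disjoint_circles n c \<longleftrightarrow> (\<forall>i<n. \<forall>j<n. i \<noteq> j \<longrightarrow> dist (c i) (c j) > 2)"

definition is_cycle_graph :: "nat \<Rightarrow> (nat \<Rightarrow> complex) \<Rightarrow> real \<Rightarrow> bool" where
  "is_cycle_graph n c r \<longleftrightarrow> n \<ge> 3 \<and>
     (\<exists>\<sigma>. bij_betw \<sigma> {..<n} {..<n} \<and>
        (\<forall>a<n. \<forall>b<n. adj n c r (\<sigma> a) (\<sigma> b) \<longleftrightarrow> (b = Suc a mod n \<or> a = Suc b mod n)))"

definition link_pos :: "(nat \<Rightarrow> complex) \<Rightarrow> nat \<Rightarrow> nat \<Rightarrow> complex" where
  "link_pos c i j = sgn (c j - c i)"

definition sched_ang :: "(nat \<Rightarrow> real) \<Rightarrow> (nat \<Rightarrow> real) \<Rightarrow> nat \<Rightarrow> real \<Rightarrow> complex" where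
  "sched_ang f g i t = cis (f i + g i * (2 * pi * t))"

definition sched_pt :: "(nat \<Rightarrow> complex) \<Rightarrow> (nat \<Rightarrow> real) \<Rightarrow> (nat \<Rightarrow> real) \<Rightarrow> nat \<Rightarrow> real \<Rightarrow> complex" where
  "sched_pt c f g i t = c i + sched_ang f g i t"

definition at_link :: "(nat \<Rightarrow> complex) \<Rightarrow> (nat \<Rightarrow> real) \<Rightarrow> (nat \<Rightarrow> real) \<Rightarrow> nat \<Rightarrow> nat \<Rightarrow> real \<Rightarrow> bool" where
  "at_link c f g i j t \<longleftrightarrow> sched_ang f g i t = link_pos c i j"

definition sync_schedule :: "nat \<Rightarrow> (nat \<Rightarrow> complex) \<Rightarrow> real \<Rightarrow> (nat \<Rightarrow> real) \<Rightarrow> (nat \<Rightarrow> real) \<Rightarrow> bool" where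
  "sync_schedule n c r f g \<longleftrightarrow>
     (\<forall>i<n. g i = 1 \<or> g i = -1) \<and>
     (\<forall>i j. adj n c r i j \<longrightarrow>
        g i = - g j \<and> (\<forall>t. at_link c f g i j t \<longleftrightarrow> at_link c f g j i t))"

text \<open>Configurations: robot k (k < n) is on circle i (Some i) or has left (None).\<close>
type_synonym config = "nat \<Rightarrow> nat option"

definition occupied :: "nat \<Rightarrow> config \<Rightarrow> nat \<Rightarrow> bool" where
  "occupied n P j \<longleftrightarrow> (\<exists>k<n. P k = Some j)"

text \<open>Switching rule at time t: P is the configuration just before t, M just after.\<close>
definition step_ok :: "nat \<Rightarrow> (nat \<Rightarrow> complex) \<Rightarrow> real \<Rightarrow> (nat \<Rightarrow> real) \<Rightarrow> (nat \<Rightarrow> real)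
    \<Rightarrow> config \<Rightarrow> real \<Rightarrow> config \<Rightarrow> bool" where
  "step_ok n c r f g P t M \<longleftrightarrow>
     (\<forall>k<n. (P k = None \<longrightarrow> M k = None) \<and>
       (\<forall>i. P k = Some i \<longrightarrow>
          (if (\<exists>j. adj n c r i j \<and> at_link c f g i j t \<and> \<not> occupied n P j)
           then (\<exists>j. M k = Some j \<and> adj n c r i j \<and> at_link c f g i j t \<and> \<not> occupied n P j)
           else M k = Some i)))"

definition left_state :: "(nat \<Rightarrow> real \<Rightarrow> nat option) \<Rightarrow> nat \<Rightarrow> real \<Rightarrow> nat option" where
  "left_state pos k t = (THE v. eventually (\<lambda>s. pos k s = v) (at_left t))"

text \<open>A run starting at time s0 from configuration P0: pos k t is the circle of robot k
  at time t (right-continuous), None once it has left.  Robots may leave at any time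
  (including s0); switching events happen at times t > s0.\<close>
definition run :: "nat \<Rightarrow> (nat \<Rightarrow> complex) \<Rightarrow> real \<Rightarrow> (nat \<Rightarrow> real) \<Rightarrow> (nat \<Rightarrow> real)
    \<Rightarrow> real \<Rightarrow> config \<Rightarrow> (nat \<Rightarrow> real \<Rightarrow> nat option) \<Rightarrow> bool" where
  "run n c r f g s0 P0 pos \<longleftrightarrow>
     (\<forall>k<n. pos k s0 = P0 k \<or> pos k s0 = None) \<and>
     (\<forall>k<n. \<forall>t\<ge>s0. eventually (\<lambda>s. pos k s = pos k t) (at_right t)) \<and>
     (\<forall>k<n. \<forall>t>s0. \<exists>v. eventually (\<lambda>s. pos k s = v) (at_left t)) \<and>
     (\<forall>t>s0. \<exists>M. step_ok n c r f g (\<lambda>k. left_state pos k t) t M \<and>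
                 (\<forall>k<n. pos k t = M k \<or> pos k t = None))"

definition partial_scs :: "nat \<Rightarrow> (nat \<Rightarrow> complex) \<Rightarrow> real \<Rightarrow> (nat \<Rightarrow> real) \<Rightarrow> (nat \<Rightarrow> real)
    \<Rightarrow> (nat \<Rightarrow> real \<Rightarrow> nat option) \<Rightarrow> bool" where
  "partial_scs n c r f g pos \<longleftrightarrow> run n c r f g 0 (\<lambda>k. Some k) pos"

definition starves :: "nat \<Rightarrow> (nat \<Rightarrow> complex) \<Rightarrow> real \<Rightarrow> (nat \<Rightarrow> real) \<Rightarrow> (nat \<Rightarrow> real)
    \<Rightarrow> (nat \<Rightarrow> real \<Rightarrow> nat option) \<Rightarrow> nat \<Rightarrow> bool" where
  "starves n c r f g pos k \<longleftrightarrow>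
     (\<forall>t\<ge>0. pos k t \<noteq> None) \<and>
     (\<forall>t>0. \<forall>i j. left_state pos k t = Some i \<longrightarrow> adj n c r i j \<longrightarrow> at_link c f g i j t \<longrightarrow>
        \<not> occupied n (\<lambda>m. left_state pos m t) j)"

definition starvation_number :: "nat \<Rightarrow> (nat \<Rightarrow> complex) \<Rightarrow> real \<Rightarrow> (nat \<Rightarrow> real) \<Rightarrow> (nat \<Rightarrow> real) \<Rightarrow> nat" where
  "starvation_number n c r f g =
     Max {card {k. k < n \<and> starves n c r f g pos k} | pos. partial_scs n c r f g pos}"

text \<open>Rings: closure of the plane points traced by a point starting on C_i at a
  non-link position (at schedule time s) that passes at every link position
  (equivalently, a lone robot that never leaves).\<close>
definition is_ring :: "nat \<Rightarrow> (nat \<Rightarrow> complex) \<Rightarrow> real \<Rightarrow> (nat \<Rightarrow> real) \<Rightarrow> (nat \<Rightarrow> real)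
    \<Rightarrow> complex set \<Rightarrow> bool" where
  "is_ring n c r f g R \<longleftrightarrow>
     (\<exists>i<n. \<exists>s. (\<forall>j. adj n c r i j \<longrightarrow> \<not> at_link c f g i j s) \<and>
        (\<exists>pos. run n c r f g s (\<lambda>k. if k = i then Some i else None) pos \<and>
               (\<forall>t\<ge>s. pos i t \<noteq> None) \<and>
               R = closure {sched_pt c f g (the (pos i t)) t | t. t \<ge> s}))"

definition robots_in :: "nat \<Rightarrow> (nat \<Rightarrow> complex) \<Rightarrow> (nat \<Rightarrow> real) \<Rightarrow> (nat \<Rightarrow> real)
    \<Rightarrow> (nat \<Rightarrow> real \<Rightarrow> nat option) \<Rightarrow> real \<Rightarrow> complex set \<Rightarrow> nat" where
  "robots_in n c f g pos t R = card {k. k < n \<and> (\<exists>i. pos k t = Some i \<and> sched_pt c f g i t \<in> R)}"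

end

theory Submission
  imports Defs
begin

lemma real_induct:
  fixes P :: "real \<Rightarrow> bool"
  assumes base: "P s0"
    and step: "\<And>\<tau>. \<tau> > s0 \<Longrightarrow> (\<And>s. s0 \<le> s \<Longrightarrow> s < \<tau> \<Longrightarrow> P s) \<Longrightarrow> P \<tau>"
    and rc: "\<And>\<tau>. \<tau> \<ge> s0 \<Longrightarrow> P \<tau> \<Longrightarrow> eventually P (at_right \<tau>)"
    and "\<tau> \<ge> s0"
  shows "P \<tau>"
proof (rule ccontr)
  assume nP: "\<not> P \<tau>"
  define S where "S = {x. s0 \<le> x \<and> \<not> P x}"
  define T where "T = Inf S"
  have ne: "S \<noteq> {}" using nP assms(4) S_def by auto
  have bdd: "bdd_below S" unfolding S_def by (rule bdd_belowI[of _ s0]) auto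
  have lb: "\<And>x. x \<in> S \<Longrightarrow> T \<le> x" unfolding T_def using bdd by (simp add: cInf_lower)
  have Ts0: "s0 \<le> T" unfolding T_def using ne by (rule cInf_greatest) (auto simp: S_def)
  have below: "\<And>s. s0 \<le> s \<Longrightarrow> s < T \<Longrightarrow> P s"
    using lb S_def by force
  have PT: "P T"
  proof (cases "T = s0")
    case True then show ?thesis using base by simp
  next
    case False then show ?thesis using Ts0 below step by auto
  qed
  have "eventually P (at_right T)" using rc Ts0 PT by auto
  then obtain b where b: "b > T" "\<And>y. y > T \<Longrightarrow> y < b \<Longrightarrow> P y"
    unfolding eventually_at_right[of T "T+1", simplified] by blast
  have "b \<le> T" unfolding T_def
  proof (rule cInf_greatest[OF ne])
    fix x assume x: "x \<in> S"
    show "b \<le> x"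
    proof (rule ccontr)
      assume "\<not> b \<le> x"
      moreover have "T \<le> x" using lb x by simp
      moreover have "\<not> P x" using x S_def by auto
      ultimately show False using b PT by (cases "x = T") auto
    qed
  qed
  then show False using b by simp
qed

lemma left_state_eq:
  assumes "eventually (\<lambda>s. pos k s = v) (at_left \<tau>)"
  shows "left_state pos k \<tau> = v"
  unfolding left_state_def
proof (rule the_equality)
  show "eventually (\<lambda>s. pos k s = v) (at_left \<tau>)" by fact
  fix w assume "eventually (\<lambda>s. pos k s = w) (at_left \<tau>)"
  with assms have "eventually (\<lambda>s. w = v) (at_left \<tau>)"
    by eventually_elim simp
  then show "w = v" using trivial_limit_at_left_real by (simp add: eventually_const_iff)
qed

lemma cis_eq_iff: "cis a = cis b \<longleftrightarrow> (\<exists>k::int. a = b + 2 * pi * k)"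
proof -
  have "cis a = cis b \<longleftrightarrow> (\<exists>n::int. \<i> * complex_of_real a = \<i> * complex_of_real b + (of_int (2 * n) * pi) * \<i>)"
    by (simp add: cis_conv_exp exp_eq)
  also have "\<dots> \<longleftrightarrow> (\<exists>k::int. a = b + 2 * pi * k)"
  proof -
    have "\<And>n::int. (\<i> * complex_of_real a = \<i> * complex_of_real b + (of_int (2 * n) * pi) * \<i>)
       \<longleftrightarrow> a = b + 2 * pi * n"
    proof -
      fix n :: int
      have "(\<i> * complex_of_real a = \<i> * complex_of_real b + (of_int (2 * n) * pi) * \<i>)
        \<longleftrightarrow> \<i> * complex_of_real a = \<i> * complex_of_real (b + 2 * pi * n)"
        by (simp add: algebra_simps)
      also have "\<dots> \<longleftrightarrow> complex_of_real a = complex_of_real (b + 2 * pi * n)" by simp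
      also have "\<dots> \<longleftrightarrow> a = b + 2 * pi * n" by (rule of_real_eq_iff)
      finally show "?thesis n" .
    qed
    then show ?thesis by simp
  qed
  finally show ?thesis .
qed


lemma adj_sym: "adj n c r i j \<Longrightarrow> adj n c r j i"
  unfolding adj_def by (auto simp: dist_commute)

lemma sgn_same_close:
  fixes a b :: complex
  assumes "sgn a = sgn b" "cmod a \<le> R" "cmod b \<le> R" "cmod a > 2" "cmod b > 2"
  shows "cmod (a - b) \<le> R - 2"
proof -
  have a: "a = of_real (cmod a) * sgn a" using assms(4)
    by (simp add: sgn_eq)
  have b: "b = of_real (cmod b) * sgn a" using assms(1,5)
    by (simp add: sgn_eq)
  have "a - b = of_real (cmod a - cmod b) * sgn a"
    using a b by (metis left_diff_distrib of_real_diff)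
  then have "cmod (a - b) = \<bar>cmod a - cmod b\<bar> * cmod (sgn a)"
    by (simp only: norm_mult norm_of_real)
  have "a \<noteq> 0" using assms(4) by auto
  then have "cmod (sgn a) = 1" by (simp add: norm_sgn)
  then show ?thesis using assms `cmod (a - b) = \<bar>cmod a - cmod b\<bar> * cmod (sgn a)` by simp
qed

lemma at_link_sym:
  assumes "sync_schedule n c r f g" "adj n c r i j"
  shows "at_link c f g i j \<tau> \<longleftrightarrow> at_link c f g j i \<tau>"
  using assms unfolding sync_schedule_def by blast

lemma no_double_link:
  assumes sync: "sync_schedule n c r f g" and disj: "disjoint_circles n c"
    and a1: "adj n c r j i1" and a2: "adj n c r j i2" and ne: "i1 \<noteq> i2"
    and l1: "at_link c f g j i1 \<tau>" and l2: "at_link c f g j i2 \<tau>"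
  shows False
proof -
  have eq: "sgn (c i1 - c j) = sgn (c i2 - c j)"
    using l1 l2 unfolding at_link_def link_pos_def by simp
  have d1: "cmod (c i1 - c j) \<le> 2 + r" "cmod (c i1 - c j) > 2"
    using a1 disj unfolding adj_def disjoint_circles_def by (auto simp: dist_norm norm_minus_commute)
  have d2: "cmod (c i2 - c j) \<le> 2 + r" "cmod (c i2 - c j) > 2"
    using a2 disj unfolding adj_def disjoint_circles_def by (auto simp: dist_norm norm_minus_commute)
  have "cmod ((c i1 - c j) - (c i2 - c j)) \<le> (2 + r) - 2"
    by (rule sgn_same_close[OF eq d1(1) d2(1) d1(2) d2(2)])
  then have "dist (c i1) (c i2) \<le> 2 + r" using d1 by (simp add: dist_norm)
  then have a12: "adj n c r i1 i2" using a1 a2 ne unfolding adj_def by auto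
  have g: "g i1 = - g j" "g i2 = - g j" "g i1 = - g i2"
  proof -
    have s: "\<And>i j. adj n c r i j \<Longrightarrow> g i = - g j" using sync unfolding sync_schedule_def by blast
    show "g i1 = - g j" using s[OF adj_sym[OF a1]] .
    show "g i2 = - g j" using s[OF adj_sym[OF a2]] .
    show "g i1 = - g i2" using s[OF a12] .
  qed
  have "g i1 = 1 \<or> g i1 = -1" using sync a1 unfolding sync_schedule_def adj_def by auto
  with g show False by auto
qed

lemma link_times:
  assumes "g i = 1 \<or> g i = -1" and "c j \<noteq> c i"
  shows "\<exists>x. \<forall>\<tau>. at_link c f g i j \<tau> \<longleftrightarrow> (\<exists>k::int. \<tau> = x + k)"
proof -
  define \<alpha> where "\<alpha> = Arg (c j - c i)"
  have lp: "link_pos c i j = cis \<alpha>" unfolding link_pos_def \<alpha>_def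
    using Arg_correct[of "c j - c i"] assms(2) by simp
  define x where "x = g i * (\<alpha> - f i) / (2 * pi)"
  have gg: "g i * g i = 1" using assms(1) by auto
  have "at_link c f g i j \<tau> \<longleftrightarrow> (\<exists>k::int. \<tau> = x + k)" for \<tau>
  proof -
    have "at_link c f g i j \<tau> \<longleftrightarrow> (\<exists>k::int. f i + g i * (2 * pi * \<tau>) = \<alpha> + 2 * pi * k)"
      unfolding at_link_def sched_ang_def lp cis_eq_iff ..
    also have "\<dots> \<longleftrightarrow> (\<exists>k::int. \<tau> = x + g i * k)"
    proof -
      have "f i + g i * (2 * pi * \<tau>) = \<alpha> + 2 * pi * k \<longleftrightarrow> \<tau> = x + g i * k" for k :: int
        using assms(1)
      proof
        assume g1: "g i = 1"
        show ?thesis unfolding x_def g1 using pi_gt_zero by (simp add: field_simps)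
      next
        assume g1: "g i = -1"
        show ?thesis unfolding x_def g1 using pi_gt_zero apply (simp add: field_simps) by auto
      qed
      then show ?thesis by simp
    qed
    also have "\<dots> \<longleftrightarrow> (\<exists>k::int. \<tau> = x + k)"
    proof
      assume "\<exists>k::int. \<tau> = x + g i * k"
      then obtain k :: int where "\<tau> = x + g i * k" by blast
      then show "\<exists>k::int. \<tau> = x + k" using assms(1)
        by (intro exI[of _ "if g i = 1 then k else -k"]) auto
    next
      assume "\<exists>k::int. \<tau> = x + k"
      then obtain k :: int where "\<tau> = x + k" by blast
      then show "\<exists>k::int. \<tau> = x + g i * k" using assms(1)
        by (intro exI[of _ "if g i = 1 then k else -k"]) auto
    qed
    finally show ?thesis .
  qed
  then show ?thesis by blast
qed


locale orient =
  fixes n :: nat and c :: "nat \<Rightarrow> complex" and r :: real and f g :: "nat \<Rightarrow> real"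
    and cir :: "int \<Rightarrow> nat" and y :: "int \<Rightarrow> real"
  assumes cir_lt: "cir q < n"
    and cir_eq: "cir q = cir q' \<longleftrightarrow> q mod int n = q' mod int n"
    and cir_surj: "i < n \<Longrightarrow> \<exists>q. cir q = i"
    and adj_cir: "adj n c r (cir q) j \<longleftrightarrow> (j = cir (q+1) \<or> j = cir (q-1))"
    and link_fwd: "at_link c f g (cir q) (cir (q+1)) \<tau> \<longleftrightarrow> (\<exists>k::int. \<tau> = y q + k)"
    and link_bwd: "at_link c f g (cir (q+1)) (cir q) \<tau> \<longleftrightarrow> (\<exists>k::int. \<tau> = y q + k)"
    and y_mono: "y q < y (q+1)"
    and y_step: "y (q+1) < y q + 1"
    and n_ge: "n \<ge> 3"
begin

lemma cir_shift: "cir (q + int n * j) = cir q"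
  using cir_eq by simp

lemma cir_congr: assumes "cir q = cir q'" shows "cir (q + d) = cir (q' + d)"
proof -
  have "q mod int n = q' mod int n" using cir_eq assms by blast
  then have "(q + d) mod int n = (q' + d) mod int n" by (rule mod_add_cong) simp
  then show ?thesis using cir_eq by blast
qed

lemma y_strict: "q < q' \<Longrightarrow> y q < y q'"
proof -
  have "y q < y (q + 1 + int d)" for d :: nat
  proof (induction d)
    case 0 then show ?case using y_mono by simp
  next
    case (Suc d)
    have "y (q + 1 + int d) < y (q + 1 + int d + 1)" by (rule y_mono)
    then show ?case using Suc by (simp add: add.assoc)
  qed
  moreover assume "q < q'"
  then have "q' = q + 1 + int (nat (q' - q - 1))" by simp
  ultimately show "y q < y q'" by metis
qed

lemma y_strict_iff: "y q < y q' \<longleftrightarrow> q < q'"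
proof
  assume a: "y q < y q'"
  show "q < q'"
  proof (rule ccontr)
    assume "\<not> q < q'"
    then have "q' < q \<or> q' = q" by auto
    then show False using y_strict[of q' q] a by auto
  qed
qed (rule y_strict)

lemma y_le_iff: "y q \<le> y q' \<longleftrightarrow> q \<le> q'"
proof -
  have "(\<not> y q' < y q) \<longleftrightarrow> (\<not> q' < q)" using y_strict_iff by simp
  then show ?thesis by (simp add: not_less)
qed

lemma y_class:
  assumes "cir q = cir q'"
  shows "\<exists>j::int. y q' = y q + j"
proof -
  have "cir (q'+1) = cir (q+1)" using cir_congr assms by metis
  have "at_link c f g (cir q') (cir (q'+1)) (y q')"
    using link_fwd[of q' "y q'"] by (auto intro: exI[of _ 0])
  then have "at_link c f g (cir q) (cir (q+1)) (y q')"
    using assms \<open>cir (q'+1) = cir (q+1)\<close> by simp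
  then show ?thesis using link_fwd by blast
qed

lemma y_period: "y (q + int n) \<ge> y q + 1"
proof -
  have "cir (q + int n) = cir q" using cir_shift[of q 1] by simp
  then obtain j :: int where j: "y (q + int n) = y q + j" using y_class by metis
  have "y q < y (q + int n)" using n_ge by (intro y_strict) simp
  then have "j \<ge> 1" using j by simp
  then show ?thesis using j by simp
qed

lemma y_period_nat: "y (q + int n * int j) \<ge> y q + j"
proof (induction j)
  case 0 then show ?case by simp
next
  case (Suc j)
  have "y (q + int n * int (Suc j)) = y ((q + int n * int j) + int n)" by (simp add: algebra_simps)
  also have "\<dots> \<ge> y (q + int n * int j) + 1" by (rule y_period)
  finally show ?case using Suc by simp
qed

lemma y_period_nat_down: "y (q - int n * int j) \<le> y q - j"
  using y_period_nat[of "q - int n * int j" j] by simp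

lemma y_unbounded: "\<exists>j::nat. y (q + int n * int j) \<ge> B"
proof -
  obtain j :: nat where "real j \<ge> B - y q" using real_arch_simple by blast
  then show ?thesis using y_period_nat[of q j] by (intro exI[of _ j]) linarith
qed

lemma y_unbounded_down: "\<exists>j::nat. y (q - int n * int j) \<le> B"
proof -
  obtain j :: nat where "real j \<ge> y q - B" using real_arch_simple by blast
  then show ?thesis using y_period_nat_down[of q j] by (intro exI[of _ j]) linarith
qed

lemma Q_ex: "\<exists>q. y (q - 1) \<le> s \<and> s < y q"
proof -
  obtain j1 :: nat where j1: "y (0 - int n * int j1) \<le> s" using y_unbounded_down by blast
  obtain j2 :: nat where j2: "y (0 + int n * int j2) \<ge> s + 1" using y_unbounded by blast
  define q0 where "q0 = 0 - int n * int j1"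
  have ex: "\<exists>d::nat. s < y (q0 + int d)"
  proof -
    have "q0 \<le> int n * int j2" unfolding q0_def by (smt (verit) mult_nonneg_nonneg of_nat_0_le_iff)
    then show ?thesis using j2 by (intro exI[of _ "nat (int n * int j2 - q0)"]) simp
  qed
  define d where "d = (LEAST d::nat. s < y (q0 + int d))"
  have d1: "s < y (q0 + int d)" unfolding d_def using ex by (rule LeastI_ex)
  have "d \<noteq> 0"
  proof
    assume "d = 0"
    then have "s < y q0" using d1 by simp
    then show False using j1 unfolding q0_def by simp
  qed
  then obtain d' where d': "d = Suc d'" using not0_implies_Suc by blast
  have "d' < d" using d' by simp
  then have "\<not> s < y (q0 + int d')" unfolding d_def by (rule not_less_Least)
  then show ?thesis using d1 d' by (intro exI[of _ "q0 + int d"]) auto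
qed

definition Q :: "real \<Rightarrow> int" where
  "Q s = (THE q. y (q - 1) \<le> s \<and> s < y q)"

lemma Q_unique:
  assumes "y (q - 1) \<le> s" "s < y q" "y (q' - 1) \<le> s" "s < y q'"
  shows "q = q'"
proof -
  have "y (q - 1) < y q'" using assms by linarith
  then have "q - 1 < q'" using y_strict_iff by blast
  moreover have "y (q' - 1) < y q" using assms by linarith
  then have "q' - 1 < q" using y_strict_iff by blast
  ultimately show ?thesis by simp
qed

lemma Q_spec: "y (Q s - 1) \<le> s" "s < y (Q s)"
proof -
  obtain q where q: "y (q - 1) \<le> s \<and> s < y q" using Q_ex by blast
  have "Q s = q" unfolding Q_def
    by (rule the_equality) (use q Q_unique in blast)+
  then show "y (Q s - 1) \<le> s" "s < y (Q s)" using q by auto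
qed

lemma Q_eq: "y (q - 1) \<le> s \<Longrightarrow> s < y q \<Longrightarrow> Q s = q"
  using Q_spec Q_unique by blast

lemma Q_mono: "s \<le> s' \<Longrightarrow> Q s \<le> Q s'"
proof (rule ccontr)
  assume "s \<le> s'" "\<not> Q s \<le> Q s'"
  then have "Q s' \<le> Q s - 1" by simp
  then have "y (Q s') \<le> y (Q s - 1)" using y_le_iff by blast
  then show False using Q_spec[of s'] Q_spec[of s] \<open>s \<le> s'\<close> by linarith
qed

lemma Q_ge: "y q \<le> s \<Longrightarrow> q + 1 \<le> Q s"
proof (rule ccontr)
  assume "y q \<le> s" "\<not> q + 1 \<le> Q s"
  then have "Q s \<le> q" by simp
  then have "y (Q s) \<le> y q" using y_le_iff by blast
  then show False using Q_spec[of s] \<open>y q \<le> s\<close> by linarith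
qed

lemma Q_le: "s < y q \<Longrightarrow> Q s \<le> q"
proof (rule ccontr)
  assume "s < y q" "\<not> Q s \<le> q"
  then have "q \<le> Q s - 1" by simp
  then have "y q \<le> y (Q s - 1)" using y_le_iff by blast
  then show False using Q_spec[of s] \<open>s < y q\<close> by linarith
qed

lemma Q_right: "eventually (\<lambda>s'. Q (s' - m) = Q (\<tau> - m)) (at_right \<tau>)"
proof -
  have lt: "\<tau> < y (Q (\<tau> - m)) + m" using Q_spec[of "\<tau> - m"] by linarith
  show ?thesis
    unfolding eventually_at_right[OF lt]
  proof (intro exI[of _ "y (Q (\<tau> - m)) + m"] conjI allI impI)
    fix s' assume "s' > \<tau>" "s' < y (Q (\<tau> - m)) + m"
    then show "Q (s' - m) = Q (\<tau> - m)" using Q_spec[of "\<tau> - m"]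
      by (intro Q_eq) auto
  qed (rule lt)
qed

definition Qleft :: "real \<Rightarrow> int" where
  "Qleft s = (if s = y (Q s - 1) then Q s - 1 else Q s)"

lemma Q_left: "eventually (\<lambda>s'. Q (s' - m) = Qleft (\<tau> - m)) (at_left \<tau>)"
proof (cases "\<tau> - m = y (Q (\<tau> - m) - 1)")
  case True
  define q where "q = Q (\<tau> - m)"
  have ql: "Qleft (\<tau> - m) = q - 1" using True unfolding Qleft_def q_def by simp
  have yq: "y (q - 1) = \<tau> - m" using True q_def by simp
  have "y (q - 2) < y (q - 1)" by (rule y_strict) simp
  then have lt: "y (q - 2) + m < \<tau>" using yq by linarith
  show ?thesis
    unfolding eventually_at_left[OF lt]
  proof (intro exI[of _ "y (q - 2) + m"] conjI allI impI)
    fix s' assume a: "s' > y (q - 2) + m" "s' < \<tau>"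
    have "Q (s' - m) = q - 1"
      by (rule Q_eq) (use a yq in auto)
    then show "Q (s' - m) = Qleft (\<tau> - m)" using ql by simp
  qed (rule lt)
next
  case False
  define q where "q = Q (\<tau> - m)"
  have ql: "Qleft (\<tau> - m) = q" using False unfolding Qleft_def q_def by simp
  have sp: "y (q - 1) \<le> \<tau> - m" "\<tau> - m < y q" using Q_spec[of "\<tau> - m"] q_def by auto
  have lt: "y (q - 1) + m < \<tau>" using False sp q_def by auto
  show ?thesis
    unfolding eventually_at_left[OF lt]
  proof (intro exI[of _ "y (q - 1) + m"] conjI allI impI)
    fix s' assume a: "s' > y (q - 1) + m" "s' < \<tau>"
    have "Q (s' - m) = q"
      by (rule Q_eq) (use a sp in auto)
    then show "Q (s' - m) = Qleft (\<tau> - m)" using ql by simp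
  qed (rule lt)
qed

end

lemma no_int_01: fixes x :: int assumes "0 < real_of_int x" "real_of_int x < 1" shows False
proof -
  have "0 < x" using assms(1) by simp
  moreover have "x < 1" using assms(2) by simp
  ultimately show False by simp
qed

lemma no_int_m10: fixes x :: int assumes "real_of_int x < 0" "-1 < real_of_int x" shows False
  using no_int_01[of "-x"] assms by simp

context orient begin

lemma cir_plus1: "cir q = cir q' \<Longrightarrow> cir (q + 1) = cir (q' + 1)"
  using cir_congr by blast

lemma cir_minus1: "cir q = cir q' \<Longrightarrow> cir (q - 1) = cir (q' - 1)"
  using cir_congr[of q q' "-1"] by simp

lemma y_class2:
  assumes "cir q = cir q'"
  shows "\<exists>j::int. y q' = y q + j \<and> y (q' - 1) = y (q - 1) + j"
proof -
  obtain j :: int where j: "y q' = y q + j" using y_class assms by blast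
  obtain j2 :: int where j2: "y (q' - 1) = y (q - 1) + j2" using y_class cir_minus1[OF assms] by blast
  have a: "y (q - 1) < y q" "y q < y (q - 1) + 1" using y_mono[of "q-1"] y_step[of "q-1"] by auto
  have b: "y (q' - 1) < y q'" "y q' < y (q' - 1) + 1" using y_mono[of "q'-1"] y_step[of "q'-1"] by auto
  have "real_of_int (j - j2) < 1" "real_of_int (j - j2) > -1" using a b j j2 by auto
  then have "j = j2" by linarith
  then show ?thesis using j j2 by auto
qed

definition Lab :: "nat \<Rightarrow> real \<Rightarrow> bool" where
  "Lab i \<tau> \<longleftrightarrow> (\<exists>q k::int. cir q = i \<and> y (q - 1) + k \<le> \<tau> \<and> \<tau> < y q + k)"

definition BLab :: "nat \<Rightarrow> real \<Rightarrow> bool" where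
  "BLab i \<tau> \<longleftrightarrow> (\<exists>q k::int. cir q = i \<and> y q + k \<le> \<tau> \<and> \<tau> < y (q - 1) + 1 + k)"

lemma Lab_at: "cir q = i \<Longrightarrow> Lab i \<tau> \<longleftrightarrow> (\<exists>k::int. y (q - 1) + k \<le> \<tau> \<and> \<tau> < y q + k)"
proof
  assume ci: "cir q = i" and "Lab i \<tau>"
  then obtain q' and k :: int where q': "cir q' = i" "y (q' - 1) + k \<le> \<tau>" "\<tau> < y q' + k"
    unfolding Lab_def by blast
  obtain j :: int where "y q = y q' + j \<and> y (q - 1) = y (q' - 1) + j" using y_class2[of q' q] ci q' by auto
  then show "\<exists>k::int. y (q - 1) + k \<le> \<tau> \<and> \<tau> < y q + k"
    using q' by (intro exI[of _ "k - j"]) auto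
qed (auto simp: Lab_def)

lemma BLab_at: "cir q = i \<Longrightarrow> BLab i \<tau> \<longleftrightarrow> (\<exists>k::int. y q + k \<le> \<tau> \<and> \<tau> < y (q - 1) + 1 + k)"
proof
  assume ci: "cir q = i" and "BLab i \<tau>"
  then obtain q' and k :: int where q': "cir q' = i" "y q' + k \<le> \<tau>" "\<tau> < y (q' - 1) + 1 + k"
    unfolding BLab_def by blast
  obtain j :: int where "y q = y q' + j \<and> y (q - 1) = y (q' - 1) + j" using y_class2[of q' q] ci q' by auto
  then show "\<exists>k::int. y q + k \<le> \<tau> \<and> \<tau> < y (q - 1) + 1 + k"
    using q' by (intro exI[of _ "k - j"]) auto
qed (auto simp: BLab_def)

lemma BLab_iff: "i < n \<Longrightarrow> BLab i \<tau> \<longleftrightarrow> \<not> Lab i \<tau>"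
proof -
  assume "i < n"
  then obtain q where q: "cir q = i" using cir_surj by blast
  have a: "y (q - 1) < y q" "y q < y (q - 1) + 1" using y_mono[of "q-1"] y_step[of "q-1"] by auto
  show ?thesis
  proof
    assume "BLab i \<tau>"
    then obtain k :: int where k: "y q + k \<le> \<tau>" "\<tau> < y (q - 1) + 1 + k" using BLab_at[OF q] by blast
    show "\<not> Lab i \<tau>"
    proof
      assume "Lab i \<tau>"
      then obtain k' :: int where k': "y (q - 1) + k' \<le> \<tau>" "\<tau> < y q + k'" using Lab_at[OF q] by blast
      have "real_of_int (k' - k) > 0" "real_of_int (k' - k) < 1" using k k' a by auto
      then show False by (rule no_int_01)
    qed
  next
    assume nl: "\<not> Lab i \<tau>"
    define k where "k = \<lfloor>\<tau> - y (q - 1)\<rfloor>"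
    have k: "y (q - 1) + k \<le> \<tau>" "\<tau> < y (q - 1) + 1 + k" unfolding k_def by linarith+
    have "\<not> \<tau> < y q + k" using nl k(1) Lab_at[OF q] by blast
    then have "y q + k \<le> \<tau>" by linarith
    then show "BLab i \<tau>" unfolding BLab_at[OF q] using k by blast
  qed
qed

lemma Lab_periodic: "Lab i (\<tau> + real_of_int j) \<longleftrightarrow> Lab i \<tau>"
proof
  assume "Lab i (\<tau> + real_of_int j)"
  then obtain q and k :: int where "cir q = i" "y (q - 1) + k \<le> \<tau> + j" "\<tau> + j < y q + k"
    unfolding Lab_def by blast
  then show "Lab i \<tau>" unfolding Lab_def by (intro exI[of _ q] exI[of _ "k - j"]) auto
next
  assume "Lab i \<tau>"
  then obtain q and k :: int where "cir q = i" "y (q - 1) + k \<le> \<tau>" "\<tau> < y q + k"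
    unfolding Lab_def by blast
  then show "Lab i (\<tau> + real_of_int j)" unfolding Lab_def by (intro exI[of _ q] exI[of _ "k + j"]) auto
qed

lemma Lab_Q: "Lab (cir (Q (\<tau> - real_of_int m))) \<tau>"
  unfolding Lab_def using Q_spec[of "\<tau> - m"]
  by (intro exI[of _ "Q (\<tau> - m)"] exI[of _ m]) (auto simp: algebra_simps)

lemma neighbors_distinct: "cir (q + 1) \<noteq> cir (q - 1)"
proof
  assume "cir (q + 1) = cir (q - 1)"
  then have "(q + 1) mod int n = (q - 1) mod int n" using cir_eq by blast
  then have "int n dvd ((q + 1) - (q - 1))" by (simp add: mod_eq_dvd_iff)
  then have "int n dvd 2" by simp
  then have "int n \<le> 2" by (rule zdvd_imp_le) simp
  then show False using n_ge by simp
qed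

lemma cir_ne_next: "cir (q + 1) \<noteq> cir q"
proof
  assume "cir (q + 1) = cir q"
  then have "(q + 1) mod int n = q mod int n" using cir_eq by blast
  then have "int n dvd ((q + 1) - q)" by (simp add: mod_eq_dvd_iff)
  then have "int n dvd 1" by simp
  then show False using n_ge by simp
qed

lemma no_link_inside:
  assumes "y (q - 1) + real_of_int m < \<tau>" "\<tau> < y q + real_of_int m" "adj n c r (cir q) j"
  shows "\<not> at_link c f g (cir q) j \<tau>"
proof
  assume al: "at_link c f g (cir q) j \<tau>"
  have a: "y (q - 1) < y q" "y q < y (q - 1) + 1" using y_mono[of "q-1"] y_step[of "q-1"] by auto
  from assms(3) have "j = cir (q + 1) \<or> j = cir (q - 1)" using adj_cir by blast
  then show False
  proof
    assume "j = cir (q + 1)"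
    then obtain k :: int where "\<tau> = y q + k" using al link_fwd by blast
    then have "real_of_int (k - m) < 0" "real_of_int (k - m) > -1" using assms a by auto
    then show False by (rule no_int_m10)
  next
    assume "j = cir (q - 1)"
    then have "at_link c f g (cir ((q - 1) + 1)) (cir (q - 1)) \<tau>" using al by simp
    then obtain k :: int where "\<tau> = y (q - 1) + k" using link_bwd by blast
    then have "real_of_int (k - m) > 0" "real_of_int (k - m) < 1" using assms a by auto
    then show False by (rule no_int_01)
  qed
qed

end

lemma run_right:
  assumes "run n c r f g s0 P0 pos" "\<tau> \<ge> s0"
  shows "eventually (\<lambda>s. \<forall>k<n. pos k s = pos k \<tau>) (at_right \<tau>)"
proof -
  have "\<forall>k\<in>{..<n}. eventually (\<lambda>s. pos k s = pos k \<tau>) (at_right \<tau>)"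
    using assms unfolding run_def by auto
  then have "eventually (\<lambda>s. \<forall>k\<in>{..<n}. pos k s = pos k \<tau>) (at_right \<tau>)"
    by (rule eventually_ball_finite[rotated]) simp
  then show ?thesis by (rule eventually_mono) auto
qed

lemma run_left:
  assumes "run n c r f g s0 P0 pos" "\<tau> > s0"
  shows "eventually (\<lambda>s. s0 < s \<and> s < \<tau> \<and> (\<forall>k<n. pos k s = left_state pos k \<tau>)) (at_left \<tau>)"
proof -
  have "\<forall>k\<in>{..<n}. eventually (\<lambda>s. pos k s = left_state pos k \<tau>) (at_left \<tau>)"
  proof
    fix k assume "k \<in> {..<n}"
    then have "\<exists>v. eventually (\<lambda>s. pos k s = v) (at_left \<tau>)"
      using assms unfolding run_def by simp
    then obtain v where v: "eventually (\<lambda>s. pos k s = v) (at_left \<tau>)" by blast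
    then have "left_state pos k \<tau> = v" by (rule left_state_eq)
    then show "eventually (\<lambda>s. pos k s = left_state pos k \<tau>) (at_left \<tau>)" using v by simp
  qed
  then have "eventually (\<lambda>s. \<forall>k\<in>{..<n}. pos k s = left_state pos k \<tau>) (at_left \<tau>)"
    by (rule eventually_ball_finite[rotated]) simp
  moreover have "eventually (\<lambda>s. s \<in> {s0<..<\<tau>}) (at_left \<tau>)"
    using assms(2) by (rule eventually_at_left_real)
  ultimately show ?thesis by eventually_elim auto
qed

lemma run_step:
  assumes "run n c r f g s0 P0 pos" "\<tau> > s0"
  shows "\<exists>M. step_ok n c r f g (\<lambda>k. left_state pos k \<tau>) \<tau> M \<and> (\<forall>k<n. pos k \<tau> = M k \<or> pos k \<tau> = None)"
  using assms unfolding run_def by auto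

lemma run_start:
  assumes "run n c r f g s0 P0 pos" "k < n"
  shows "pos k s0 = P0 k \<or> pos k s0 = None"
  using assms unfolding run_def by auto

lemma ev_happens: "eventually P (at_left (\<tau>::real)) \<Longrightarrow> \<exists>s. P s"
  using eventually_happens trivial_limit_at_left_real by blast

lemma step_none:
  assumes "step_ok n c r f g P \<tau> M" "k < n" "P k = None"
  shows "M k = None"
  using assms unfolding step_ok_def by auto

lemma step_some:
  assumes "step_ok n c r f g P \<tau> M" "k < n" "P k = Some i"
  shows "M k = Some i \<or> (\<exists>j. M k = Some j \<and> adj n c r i j \<and> at_link c f g i j \<tau> \<and> \<not> occupied n P j)"
  using assms unfolding step_ok_def by (cases "\<exists>j. adj n c r i j \<and> at_link c f g i j \<tau> \<and> \<not> occupied n P j") auto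

lemma step_move:
  assumes "step_ok n c r f g P \<tau> M" "k < n" "P k = Some i" "adj n c r i j" "at_link c f g i j \<tau>"
    "\<not> occupied n P j"
  shows "\<exists>j'. M k = Some j' \<and> adj n c r i j' \<and> at_link c f g i j' \<tau>"
proof -
  have C: "\<exists>j. adj n c r i j \<and> at_link c f g i j \<tau> \<and> \<not> occupied n P j" using assms by blast
  have "if (\<exists>j. adj n c r i j \<and> at_link c f g i j \<tau> \<and> \<not> occupied n P j)
           then (\<exists>j. M k = Some j \<and> adj n c r i j \<and> at_link c f g i j \<tau> \<and> \<not> occupied n P j)
           else M k = Some i" using assms(1-3) unfolding step_ok_def by blast
  then show ?thesis using C by (simp only: if_True) blast
qed

lemma step_stay:
  assumes "step_ok n c r f g P \<tau> M" "k < n" "P k = Some i" "\<And>j. adj n c r i j \<Longrightarrow> \<not> at_link c f g i j \<tau>"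
  shows "M k = Some i"
proof -
  have "\<not> (\<exists>j. adj n c r i j \<and> at_link c f g i j \<tau> \<and> \<not> occupied n P j)" using assms(4) by blast
  then show ?thesis using assms(1-3) unfolding step_ok_def by auto
qed

definition inj_cfg :: "nat \<Rightarrow> config \<Rightarrow> bool" where
  "inj_cfg n P \<longleftrightarrow> (\<forall>k<n. \<forall>i. P k = Some i \<longrightarrow> i < n) \<and>
      (\<forall>k1<n. \<forall>k2<n. k1 \<noteq> k2 \<longrightarrow> P k1 \<noteq> None \<longrightarrow> P k1 \<noteq> P k2)"

lemma inj_cfg_drop:
  assumes "inj_cfg n M" "\<forall>k<n. P k = M k \<or> P k = None"
  shows "inj_cfg n P"
  using assms unfolding inj_cfg_def by (metis option.distinct(1))

lemma inj_cfg_cong: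
  assumes "inj_cfg n M" "\<forall>k<n. P k = M k"
  shows "inj_cfg n P"
  using assms unfolding inj_cfg_def by auto

lemma step_inj:
  assumes sync: "sync_schedule n c r f g" and disj: "disjoint_circles n c"
    and inj: "inj_cfg n P" and st: "step_ok n c r f g P \<tau> M"
  shows "inj_cfg n M"
proof -
  have lt: "\<forall>k<n. \<forall>i. M k = Some i \<longrightarrow> i < n"
  proof (intro allI impI)
    fix k i assume k: "k < n" and Mk: "M k = Some i"
    show "i < n"
    proof (cases "P k")
      case None then show ?thesis using step_none[OF st k] Mk by simp
    next
      case (Some i0)
      then have "i0 < n" using inj k unfolding inj_cfg_def by auto
      then show ?thesis using step_some[OF st k Some] Mk unfolding adj_def by auto
    qed
  qed
  have dist: "\<forall>k1<n. \<forall>k2<n. k1 \<noteq> k2 \<longrightarrow> M k1 \<noteq> None \<longrightarrow> M k1 \<noteq> M k2"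
  proof (intro allI impI notI)
    fix k1 k2 assume k1: "k1 < n" and k2: "k2 < n" and ne: "k1 \<noteq> k2" and nn: "M k1 \<noteq> None"
      and eq: "M k1 = M k2"
    obtain x where x1: "M k1 = Some x" using nn by auto
    have x2: "M k2 = Some x" using x1 eq by simp
    obtain i1 where i1: "P k1 = Some i1" using step_none[OF st k1] x1 by (cases "P k1") auto
    obtain i2 where i2: "P k2 = Some i2" using step_none[OF st k2] x2 by (cases "P k2") auto
    have "P k1 \<noteq> P k2" using inj k1 k2 ne i1 unfolding inj_cfg_def by blast
    then have i12: "i1 \<noteq> i2" using i1 i2 by auto
    have occ1: "occupied n P i1" using k1 i1 unfolding occupied_def by auto
    have occ2: "occupied n P i2" using k2 i2 unfolding occupied_def by auto
    from step_some[OF st k1 i1] step_some[OF st k2 i2] x1 x2 show False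
    proof (elim disjE exE conjE)
      assume "M k1 = Some i1" "M k2 = Some i2"
      then show False using x1 x2 i12 by simp
    next
      fix j assume "M k1 = Some i1" "M k2 = Some j" "\<not> occupied n P j"
      then show False using x1 x2 occ1 by simp
    next
      fix j assume "M k1 = Some j" "M k2 = Some i2" "\<not> occupied n P j"
      then show False using x1 x2 occ2 by simp
    next
      fix j1 j2 assume a: "M k1 = Some j1" "adj n c r i1 j1" "at_link c f g i1 j1 \<tau>"
        "M k2 = Some j2" "adj n c r i2 j2" "at_link c f g i2 j2 \<tau>"
      then have j: "j1 = x" "j2 = x" using x1 x2 by auto
      have b: "adj n c r i1 x" "at_link c f g i1 x \<tau>" "adj n c r i2 x" "at_link c f g i2 x \<tau>"
        using a j by auto
      show False
        using no_double_link[OF sync disj adj_sym[OF b(1)] adj_sym[OF b(3)] i12]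
          at_link_sym[OF sync b(1)] at_link_sym[OF sync b(3)] b by blast
    qed
  qed
  show ?thesis unfolding inj_cfg_def by (intro conjI lt dist)
qed

lemma run_inj:
  assumes sync: "sync_schedule n c r f g" and disj: "disjoint_circles n c"
    and run: "run n c r f g s0 P0 pos" and inj0: "inj_cfg n P0" and "\<tau> \<ge> s0"
  shows "inj_cfg n (\<lambda>k. pos k \<tau>)"
proof (rule real_induct[of "\<lambda>\<tau>. inj_cfg n (\<lambda>k. pos k \<tau>)" s0 \<tau>])
  show "inj_cfg n (\<lambda>k. pos k s0)" by (rule inj_cfg_drop[OF inj0]) (use run_start[OF run] in blast)
next
  fix \<tau> :: real assume t: "\<tau> > s0" and IH: "\<And>s. s0 \<le> s \<Longrightarrow> s < \<tau> \<Longrightarrow> inj_cfg n (\<lambda>k. pos k s)"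
  obtain s where s: "s0 < s" "s < \<tau>" "\<forall>k<n. pos k s = left_state pos k \<tau>"
    using ev_happens[OF run_left[OF run t]] by blast
  have "inj_cfg n (\<lambda>k. pos k s)" using s by (intro IH) auto
  then have "inj_cfg n (\<lambda>k. left_state pos k \<tau>)" by (rule inj_cfg_cong) (use s(3) in simp)
  moreover obtain M where M: "step_ok n c r f g (\<lambda>k. left_state pos k \<tau>) \<tau> M"
    "\<forall>k<n. pos k \<tau> = M k \<or> pos k \<tau> = None" using run_step[OF run t] by blast
  ultimately have "inj_cfg n M" using step_inj[OF sync disj] by metis
  then show "inj_cfg n (\<lambda>k. pos k \<tau>)" using M(2) by (rule inj_cfg_drop)
next
  fix \<tau> :: real assume t: "\<tau> \<ge> s0" and P: "inj_cfg n (\<lambda>k. pos k \<tau>)"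
  show "eventually (\<lambda>\<tau>. inj_cfg n (\<lambda>k. pos k \<tau>)) (at_right \<tau>)" using run_right[OF run t]
    by (rule eventually_mono) (rule inj_cfg_cong[OF P], simp)
qed (rule assms(5))


context orient begin

lemma path:
  assumes sync: "sync_schedule n c r f g" and disj: "disjoint_circles n c"
    and run: "run n c r f g s0 P0 pos" and u: "u < n"
    and nn: "\<And>\<tau>. \<tau> \<ge> s0 \<Longrightarrow> pos u \<tau> \<noteq> None"
    and st: "pos u s0 = Some (cir (Q (s0 - real_of_int m)))"
    and free: "\<And>\<tau> i j. \<tau> > s0 \<Longrightarrow> left_state pos u \<tau> = Some i \<Longrightarrow> adj n c r i j \<Longrightarrow>
                  at_link c f g i j \<tau> \<Longrightarrow> \<not> occupied n (\<lambda>k. left_state pos k \<tau>) j"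
    and t: "\<tau> \<ge> s0"
  shows "pos u \<tau> = Some (cir (Q (\<tau> - real_of_int m)))"
proof (rule real_induct[of "\<lambda>\<tau>. pos u \<tau> = Some (cir (Q (\<tau> - real_of_int m)))" s0 \<tau>])
  show "pos u s0 = Some (cir (Q (s0 - real_of_int m)))" by (rule st)
next
  fix \<tau> :: real assume t: "\<tau> > s0"
    and IH: "\<And>s. s0 \<le> s \<Longrightarrow> s < \<tau> \<Longrightarrow> pos u s = Some (cir (Q (s - real_of_int m)))"
  have ev: "eventually (\<lambda>s. (s0 < s \<and> s < \<tau> \<and> (\<forall>k<n. pos k s = left_state pos k \<tau>))
        \<and> Q (s - real_of_int m) = Qleft (\<tau> - real_of_int m)) (at_left \<tau>)"
    using run_left[OF run t] Q_left by (rule eventually_conj)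
  obtain s where s: "s0 < s" "s < \<tau>" "\<forall>k<n. pos k s = left_state pos k \<tau>"
     "Q (s - real_of_int m) = Qleft (\<tau> - real_of_int m)"
    using ev_happens[OF ev] by blast
  have ls: "left_state pos u \<tau> = Some (cir (Qleft (\<tau> - real_of_int m)))"
    using IH[of s] s u by auto
  obtain M where M: "step_ok n c r f g (\<lambda>k. left_state pos k \<tau>) \<tau> M"
    "\<forall>k<n. pos k \<tau> = M k \<or> pos k \<tau> = None" using run_step[OF run t] by blast
  have pM: "pos u \<tau> = M u" using M(2) nn[of \<tau>] t u by auto
  define q where "q = Q (\<tau> - real_of_int m)"
  have sp: "y (q - 1) \<le> \<tau> - m" "\<tau> - m < y q" using Q_spec q_def by auto
  show "pos u \<tau> = Some (cir (Q (\<tau> - real_of_int m)))"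
  proof (cases "\<tau> - real_of_int m = y (q - 1)")
    case True
    then have ql: "Qleft (\<tau> - real_of_int m) = q - 1" unfolding Qleft_def q_def by simp
    have c1: "cir (q - 1 + 1) = cir q" by simp
    have "\<exists>k::int. \<tau> = y (q - 1) + k" using True by (intro exI[of _ m]) simp
    then have "at_link c f g (cir (q - 1)) (cir (q - 1 + 1)) \<tau>" using link_fwd by blast
    then have al: "at_link c f g (cir (q - 1)) (cir q) \<tau>" using c1 by simp
    have ad: "adj n c r (cir (q - 1)) (cir q)" using adj_cir[of "q - 1" "cir q"] by simp
    have nocc: "\<not> occupied n (\<lambda>k. left_state pos k \<tau>) (cir q)"
      using free[OF t _ ad al] ls ql by simp
    obtain j' where j': "M u = Some j'" "adj n c r (cir (q - 1)) j'" "at_link c f g (cir (q - 1)) j' \<tau>"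
      using step_move[OF M(1) u _ ad al nocc] ls ql by auto
    have "j' = cir q"
    proof (rule ccontr)
      assume "j' \<noteq> cir q"
      then show False using no_double_link[OF sync disj ad j'(2) _ al j'(3)] by blast
    qed
    then show ?thesis using pM j' q_def by simp
  next
    case False
    then have ql: "Qleft (\<tau> - real_of_int m) = q" unfolding Qleft_def q_def by simp
    have in1: "y (q - 1) + real_of_int m < \<tau>" "\<tau> < y q + real_of_int m" using sp False by auto
    have "M u = Some (cir q)"
      by (rule step_stay[OF M(1) u]) (use ls ql no_link_inside[OF in1] in auto)
    then show ?thesis using pM q_def by simp
  qed
next
  fix \<tau> :: real assume t: "\<tau> \<ge> s0" and P: "pos u \<tau> = Some (cir (Q (\<tau> - real_of_int m)))"
  show "eventually (\<lambda>\<tau>. pos u \<tau> = Some (cir (Q (\<tau> - real_of_int m)))) (at_right \<tau>)"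
    using eventually_conj[OF run_right[OF run t] Q_right[of m \<tau>]]
    by (rule eventually_mono) (use P u in auto)
qed (rule t)

end

lemma mod_suc_int:
  fixes n :: nat and q :: int
  assumes "n > 0"
  shows "nat ((q + 1) mod int n) = Suc (nat (q mod int n)) mod n"
proof -
  have "int (Suc (nat (q mod int n)) mod n) = (q mod int n + 1) mod int n"
    using assms by (simp add: zmod_int of_nat_Suc add.commute)
  also have "\<dots> = (q + 1) mod int n" by (simp add: mod_add_left_eq)
  finally show ?thesis by (metis nat_int)
qed

lemma mod_pred_int:
  fixes n :: nat and q :: int
  assumes "n > 0" "b < n"
  shows "nat (q mod int n) = Suc b mod n \<longleftrightarrow> b = nat ((q - 1) mod int n)"
proof
  assume a: "nat (q mod int n) = Suc b mod n"
  then have "q mod int n = (int b + 1) mod int n"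
    using assms by (metis int_ops(4) nat_int of_nat_mod pos_mod_sign of_nat_0_less_iff int_nat_eq)
  then have "(q - 1) mod int n = ((int b + 1) - 1) mod int n"
    by (metis mod_diff_left_eq)
  then have "(q - 1) mod int n = int b" using assms by simp
  then show "b = nat ((q - 1) mod int n)" by simp
next
  assume b: "b = nat ((q - 1) mod int n)"
  have "int (Suc b mod n) = (int b + 1) mod int n" by (simp add: zmod_int add.commute)
  also have "int b = (q - 1) mod int n" using b assms by simp
  also have "((q - 1) mod int n + 1) mod int n = q mod int n" by (simp add: mod_add_left_eq)
  finally show "nat (q mod int n) = Suc b mod n" by (metis nat_int)
qed


definition nxt :: "real \<Rightarrow> real \<Rightarrow> real" where "nxt a z = z + real_of_int \<lfloor>a - z\<rfloor> + 1"
definition prv :: "real \<Rightarrow> real \<Rightarrow> real" where "prv a z = z + real_of_int \<lceil>a - z\<rceil> - 1"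

lemma nxt_class: "\<exists>k::int. nxt a z = z + real_of_int k"
  unfolding nxt_def by (intro exI[of _ "\<lfloor>a - z\<rfloor> + 1"]) simp
lemma prv_class: "\<exists>k::int. prv a z = z + real_of_int k"
  unfolding prv_def by (intro exI[of _ "\<lceil>a - z\<rceil> - 1"]) simp

lemma nxt_bounds:
  fixes a z :: real
  assumes "\<not> (\<exists>k::int. a = z + real_of_int k)"
  shows "a < nxt a z" "nxt a z < a + 1"
proof -
  define F where "F = real_of_int \<lfloor>a - z\<rfloor>"
  have ne: "F \<noteq> a - z"
  proof
    assume "F = a - z"
    then have "a = z + F" by simp
    then have "a = z + real_of_int \<lfloor>a - z\<rfloor>" by (simp only: F_def)
    with assms show False by blast
  qed
  have le: "F \<le> a - z" unfolding F_def by (rule of_int_floor_le)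
  have gt: "a - z < F + 1" unfolding F_def by (rule real_of_int_floor_add_one_gt)
  have e: "nxt a z = z + F + 1" unfolding nxt_def F_def by simp
  from ne le have "F < a - z" by (simp add: less_le)
  then show "a < nxt a z" "nxt a z < a + 1" using gt e by linarith+
qed

lemma prv_bounds:
  fixes a z :: real
  assumes "\<not> (\<exists>k::int. a = z + real_of_int k)"
  shows "prv a z < a" "a < prv a z + 1"
proof -
  define F where "F = real_of_int \<lceil>a - z\<rceil>"
  have ne: "F \<noteq> a - z"
  proof
    assume "F = a - z"
    then have "a = z + F" by simp
    then have "a = z + real_of_int \<lceil>a - z\<rceil>" by (simp only: F_def)
    with assms show False by blast
  qed
  have le: "a - z \<le> F" unfolding F_def by (rule le_of_int_ceiling)
  have gt: "F - 1 < a - z" unfolding F_def using ceiling_correct[of "a - z"] by blast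
  have e: "prv a z = z + F - 1" unfolding prv_def F_def by simp
  from ne le have "a - z < F" by (simp add: less_le)
  then show "prv a z < a" "a < prv a z + 1" using gt e by linarith+
qed

fun up :: "(int \<Rightarrow> real) \<Rightarrow> nat \<Rightarrow> real" where
  "up x 0 = x 0"
| "up x (Suc k) = nxt (up x k) (x (int k + 1))"

fun down :: "(int \<Rightarrow> real) \<Rightarrow> nat \<Rightarrow> real" where
  "down x 0 = x 0"
| "down x (Suc k) = prv (down x k) (x (- int k - 1))"

definition yseq :: "(int \<Rightarrow> real) \<Rightarrow> int \<Rightarrow> real" where
  "yseq x q = (if q \<ge> 0 then up x (nat q) else down x (nat (- q)))"

lemma up_class: "\<exists>k::int. up x m = x (int m) + k"
proof (cases m)
  case 0 then show ?thesis by (intro exI[of _ 0]) simp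
next
  case (Suc j)
  obtain k :: int where "nxt (up x j) (x (int j + 1)) = x (int j + 1) + k" using nxt_class by blast
  then have "up x m = x (int m) + k" using Suc by (simp add: add.commute)
  then show ?thesis by blast
qed

lemma down_class: "\<exists>k::int. down x m = x (- int m) + k"
proof (cases m)
  case 0 then show ?thesis by (intro exI[of _ 0]) simp
next
  case (Suc j)
  obtain k :: int where "prv (down x j) (x (- int j - 1)) = x (- int j - 1) + k" using prv_class by blast
  moreover have "down x m = prv (down x j) (x (- int j - 1))" using Suc by simp
  ultimately have d: "down x m = x (- int j - 1) + k" by simp
  have e: "- int m = - int j - 1" using Suc by simp
  show ?thesis unfolding e using d by blast
qed

lemma yseq_class: "\<exists>k::int. yseq x q = x q + k"
proof (cases "q \<ge> 0")
  case True then show ?thesis unfolding yseq_def using up_class[of x "nat q"] by simp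
next
  case False then show ?thesis unfolding yseq_def using down_class[of x "nat (-q)"] by simp
qed

lemma yseq_step:
  fixes x :: "int \<Rightarrow> real"
  assumes sep: "\<And>q a. (\<exists>k::int. a = x q + real_of_int k) \<Longrightarrow> (\<exists>k::int. a = x (q+1) + real_of_int k) \<Longrightarrow> False"
  shows "yseq x q < yseq x (q + 1) \<and> yseq x (q + 1) < yseq x q + 1"
proof (cases "q \<ge> 0")
  case True
  have e: "yseq x (q + 1) = nxt (yseq x q) (x (q + 1))"
    using True unfolding yseq_def by (simp add: nat_add_distrib)
  have "\<not> (\<exists>k::int. yseq x q = x (q + 1) + real_of_int k)" using sep[where a = "yseq x q" and q = q] yseq_class by blast
  then show ?thesis using nxt_bounds e by simp
next
  case False
  define k where "k = nat (- q - 1)"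
  have q: "q = - int k - 1" using False k_def by simp
  have e1: "yseq x q = down x (Suc k)" unfolding yseq_def using False q by (simp add: nat_add_distrib)
  have e2: "yseq x (q + 1) = down x k"
  proof (cases "k = 0")
    case True then show ?thesis unfolding yseq_def using q by simp
  next
    case False then show ?thesis unfolding yseq_def using q by simp
  qed
  have e: "yseq x q = prv (yseq x (q + 1)) (x q)" using e1 e2 q by simp
  have "\<not> (\<exists>k::int. yseq x (q + 1) = x q + real_of_int k)" using sep[where a = "yseq x (q+1)" and q = q] yseq_class by blast
  then show ?thesis using prv_bounds e by simp
qed


lemma cycle_orient:
  assumes disj: "disjoint_circles n c" and cyc: "is_cycle_graph n c r"
    and sync: "sync_schedule n c r f g"
  shows "\<exists>cir y. orient n c r f g cir y"
proof -
  have n3: "n \<ge> 3" using cyc unfolding is_cycle_graph_def by simp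
  then have n0: "n > 0" by simp
  obtain \<sigma> where bij: "bij_betw \<sigma> {..<n} {..<n}"
    and ch0: "\<forall>a<n. \<forall>b<n. adj n c r (\<sigma> a) (\<sigma> b) \<longleftrightarrow> (b = Suc a mod n \<or> a = Suc b mod n)"
    using cyc unfolding is_cycle_graph_def by blast
  have ch: "\<And>a b. a < n \<Longrightarrow> b < n \<Longrightarrow> adj n c r (\<sigma> a) (\<sigma> b) \<longleftrightarrow> (b = Suc a mod n \<or> a = Suc b mod n)"
    using ch0 by blast
  have inj: "inj_on \<sigma> {..<n}" using bij_betw_imp_inj_on[OF bij] .
  have img: "\<sigma> ` {..<n} = {..<n}" using bij_betw_imp_surj_on[OF bij] .
  define cir where "cir q = \<sigma> (nat (q mod int n))" for q :: int
  have natlt: "nat (q mod int n) < n" for q :: int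
  proof -
    have "0 \<le> q mod int n" "q mod int n < int n" using n0 by simp_all
    then show ?thesis by (simp add: nat_less_iff)
  qed
  have O1: "cir q < n" for q using natlt img unfolding cir_def by blast
  have O5: "cir q = cir q' \<longleftrightarrow> q mod int n = q' mod int n" for q q'
  proof
    assume "cir q = cir q'"
    then have "nat (q mod int n) = nat (q' mod int n)" using inj natlt unfolding cir_def
      by (meson inj_on_eq_iff lessThan_iff)
    then show "q mod int n = q' mod int n" using n0 by (simp add: nat_eq_iff2)
  qed (simp add: cir_def)
  have surj: "\<exists>q. cir q = i" if il: "i < n" for i
  proof -
    have "i \<in> \<sigma> ` {..<n}" using il img by simp
    then obtain a where a: "a < n" "\<sigma> a = i" by auto
    then show ?thesis unfolding cir_def by (intro exI[of _ "int a"]) simp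
  qed
  have O4: "adj n c r (cir q) j \<longleftrightarrow> (j = cir (q+1) \<or> j = cir (q-1))" for q j
  proof
    assume ad: "adj n c r (cir q) j"
    then have "j < n" unfolding adj_def by simp
    then have "j \<in> \<sigma> ` {..<n}" using img by simp
    then obtain b where b: "b < n" "j = \<sigma> b" by auto
    have "b = Suc (nat (q mod int n)) mod n \<or> nat (q mod int n) = Suc b mod n"
      using ch[OF natlt[of q] b(1)] ad b unfolding cir_def by simp
    then show "j = cir (q+1) \<or> j = cir (q-1)"
    proof
      assume "b = Suc (nat (q mod int n)) mod n"
      then have "b = nat ((q + 1) mod int n)" using mod_suc_int[OF n0] by simp
      then show ?thesis using b unfolding cir_def by simp
    next
      assume "nat (q mod int n) = Suc b mod n"
      then have "b = nat ((q - 1) mod int n)" using mod_pred_int[OF n0 b(1)] by simp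
      then show ?thesis using b unfolding cir_def by simp
    qed
  next
    assume "j = cir (q+1) \<or> j = cir (q-1)"
    then show "adj n c r (cir q) j"
    proof
      assume j: "j = cir (q+1)"
      have "nat ((q + 1) mod int n) = Suc (nat (q mod int n)) mod n" by (rule mod_suc_int[OF n0])
      then show ?thesis using ch[OF natlt[of q] natlt[of "q+1"]] j unfolding cir_def by simp
    next
      assume j: "j = cir (q-1)"
      have "nat (q mod int n) = Suc (nat ((q - 1) mod int n)) mod n"
        using mod_pred_int[OF n0 natlt[of "q-1"]] by simp
      then show ?thesis using ch[OF natlt[of q] natlt[of "q-1"]] j unfolding cir_def by simp
    qed
  qed
  have adj_next: "adj n c r (cir q) (cir (q+1))" for q using O4 by blast
  have ne_mod: "(q + d) mod int n \<noteq> q mod int n" if "0 < d" "d < int n" for q d :: int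
  proof
    assume "(q + d) mod int n = q mod int n"
    then have "int n dvd d" by (metis add_diff_cancel_left' mod_eq_dvd_iff)
    then have "int n \<le> d" using that(1) by (rule zdvd_imp_le)
    then show False using that(2) by simp
  qed
  have cne: "cir (q + 1) \<noteq> cir q" for q using O5 ne_mod[of 1 q] n3 by auto
  have cne2: "cir (q + 2) \<noteq> cir q" for q using O5 ne_mod[of 2 q] n3 by auto
  have gpm: "g i = 1 \<or> g i = -1" if "i < n" for i using sync that unfolding sync_schedule_def by blast
  have cdist: "c (cir (q+1)) \<noteq> c (cir q)" for q
  proof
    assume "c (cir (q+1)) = c (cir q)"
    moreover have "2 < dist (c (cir (q+1))) (c (cir q))"
      using disj O1[of "q+1"] O1[of q] cne[of q] unfolding disjoint_circles_def by blast
    ultimately show False by simp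
  qed
  define x where "x q = (SOME x. \<forall>\<tau>. at_link c f g (cir q) (cir (q+1)) \<tau> \<longleftrightarrow> (\<exists>k::int. \<tau> = x + k))" for q
  have xspec: "at_link c f g (cir q) (cir (q+1)) \<tau> \<longleftrightarrow> (\<exists>k::int. \<tau> = x q + k)" for q \<tau>
  proof -
    have "\<exists>x. \<forall>\<tau>. at_link c f g (cir q) (cir (q+1)) \<tau> \<longleftrightarrow> (\<exists>k::int. \<tau> = x + k)"
      by (rule link_times[where g=g and i="cir q" and c=c and j="cir (q+1)" and f=f, OF gpm[OF O1[of q]] cdist[of q]])
    then show ?thesis unfolding x_def by (rule someI_ex[where P = "\<lambda>x. \<forall>\<tau>. at_link c f g (cir q) (cir (q+1)) \<tau> \<longleftrightarrow> (\<exists>k::int. \<tau> = x + k)", THEN spec])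
  qed
  have xspec': "at_link c f g (cir (q+1)) (cir q) \<tau> \<longleftrightarrow> (\<exists>k::int. \<tau> = x q + k)" for q \<tau>
    using xspec at_link_sym[OF sync adj_next] by blast
  have sep: "False" if "\<exists>k::int. a = x q + real_of_int k" "\<exists>k::int. a = x (q+1) + real_of_int k" for q a
  proof -
    have l1: "at_link c f g (cir (q+1)) (cir q) a" using xspec' that(1) by blast
    have l2: "at_link c f g (cir (q+1)) (cir (q+1+1)) a" using xspec that(2) by blast
    have a1: "adj n c r (cir (q+1)) (cir q)" using O4 by auto
    have a2: "adj n c r (cir (q+1)) (cir (q+1+1))" using O4 by auto
    have "cir q \<noteq> cir (q+1+1)" using cne2[of q] by (simp add: add.assoc)
    then show False using no_double_link[OF sync disj a1 a2 _ l1 l2] by blast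
  qed
  define y where "y = yseq x"
  have ycl: "\<exists>k::int. y q = x q + k" for q unfolding y_def by (rule yseq_class)
  have yst: "y q < y (q + 1) \<and> y (q + 1) < y q + 1" for q
    unfolding y_def by (rule yseq_step) (use sep in blast)
  have fwd: "at_link c f g (cir q) (cir (q+1)) \<tau> \<longleftrightarrow> (\<exists>k::int. \<tau> = y q + k)" for q \<tau>
  proof -
    obtain k0 :: int where k0: "y q = x q + k0" using ycl by blast
    have "(\<exists>k::int. \<tau> = x q + k) \<longleftrightarrow> (\<exists>k::int. \<tau> = y q + k)"
    proof
      assume "\<exists>k::int. \<tau> = x q + k"
      then obtain k :: int where "\<tau> = x q + k" by blast
      then show "\<exists>k::int. \<tau> = y q + k" using k0 by (intro exI[of _ "k - k0"]) simp
    next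
      assume "\<exists>k::int. \<tau> = y q + k"
      then obtain k :: int where "\<tau> = y q + k" by blast
      then show "\<exists>k::int. \<tau> = x q + k" using k0 by (intro exI[of _ "k + k0"]) simp
    qed
    then show ?thesis using xspec by blast
  qed
  have bwd: "at_link c f g (cir (q+1)) (cir q) \<tau> \<longleftrightarrow> (\<exists>k::int. \<tau> = y q + k)" for q \<tau>
    using fwd at_link_sym[OF sync adj_next] by blast
  have "orient n c r f g cir y"
    by (unfold_locales) (use O1 O5 surj O4 fwd bwd yst n3 in auto)
  then show ?thesis by blast
qed


lemma neg_mod_eq: "(- q) mod int n = (- q') mod int n \<longleftrightarrow> q mod int n = q' mod int n"
proof -
  have "(- q) mod int n = (- q') mod int n \<longleftrightarrow> int n dvd (- q - (- q'))" by (rule mod_eq_dvd_iff)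
  also have "- q - (- q') = - (q - q')" by simp
  also have "int n dvd (- (q - q')) \<longleftrightarrow> int n dvd (q - q')" by (rule dvd_minus_iff)
  also have "\<dots> \<longleftrightarrow> q mod int n = q' mod int n" by (rule mod_eq_dvd_iff[symmetric])
  finally show ?thesis .
qed

context orient begin

lemma rev_orient: "orient n c r f g (\<lambda>q. cir (- q)) (\<lambda>q. y (- q - 1) + q + 1)"
proof
  fix q :: int
  show "cir (- q) < n" by (rule cir_lt)
next
  fix q q' :: int
  show "cir (- q) = cir (- q') \<longleftrightarrow> q mod int n = q' mod int n" using cir_eq neg_mod_eq by blast
next
  fix i assume "i < n"
  then obtain q where "cir q = i" using cir_surj by blast
  then show "\<exists>q. cir (- q) = i" by (intro exI[of _ "-q"]) simp
next
  fix q :: int and j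
  show "adj n c r (cir (- q)) j \<longleftrightarrow> (j = cir (- (q + 1)) \<or> j = cir (- (q - 1)))"
  proof -
    have e: "- (q + 1) = - q - 1" "- (q - 1) = - q + 1" by simp_all
    show ?thesis unfolding e using adj_cir[of "- q" j] by blast
  qed
next
  fix q :: int and \<tau>
  have e1: "cir (- q) = cir (- q - 1 + 1)" "cir (- (q + 1)) = cir (- q - 1)" by (rule arg_cong[where f=cir], simp)+
  have "at_link c f g (cir (- q)) (cir (- (q + 1))) \<tau> \<longleftrightarrow> (\<exists>k::int. \<tau> = y (- q - 1) + k)"
    unfolding e1 by (rule link_bwd)
  also have "\<dots> \<longleftrightarrow> (\<exists>k::int. \<tau> = y (- q - 1) + real_of_int q + 1 + k)"
  proof
    assume "\<exists>k::int. \<tau> = y (- q - 1) + k"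
    then obtain k :: int where "\<tau> = y (- q - 1) + k" by blast
    then show "\<exists>k::int. \<tau> = y (- q - 1) + real_of_int q + 1 + k" by (intro exI[of _ "k - q - 1"]) simp
  next
    assume "\<exists>k::int. \<tau> = y (- q - 1) + real_of_int q + 1 + k"
    then obtain k :: int where "\<tau> = y (- q - 1) + real_of_int q + 1 + k" by blast
    then show "\<exists>k::int. \<tau> = y (- q - 1) + k" by (intro exI[of _ "k + q + 1"]) simp
  qed
  finally show "at_link c f g (cir (- q)) (cir (- (q + 1))) \<tau> \<longleftrightarrow> (\<exists>k::int. \<tau> = y (- q - 1) + real_of_int q + 1 + k)" .
next
  fix q :: int and \<tau>
  have e1: "cir (- q) = cir (- q - 1 + 1)" "cir (- (q + 1)) = cir (- q - 1)" by (rule arg_cong[where f=cir], simp)+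
  have "at_link c f g (cir (- (q + 1))) (cir (- q)) \<tau> \<longleftrightarrow> (\<exists>k::int. \<tau> = y (- q - 1) + k)"
    unfolding e1 by (rule link_fwd)
  also have "\<dots> \<longleftrightarrow> (\<exists>k::int. \<tau> = y (- q - 1) + real_of_int q + 1 + k)"
  proof
    assume "\<exists>k::int. \<tau> = y (- q - 1) + k"
    then obtain k :: int where "\<tau> = y (- q - 1) + k" by blast
    then show "\<exists>k::int. \<tau> = y (- q - 1) + real_of_int q + 1 + k" by (intro exI[of _ "k - q - 1"]) simp
  next
    assume "\<exists>k::int. \<tau> = y (- q - 1) + real_of_int q + 1 + k"
    then obtain k :: int where "\<tau> = y (- q - 1) + real_of_int q + 1 + k" by blast
    then show "\<exists>k::int. \<tau> = y (- q - 1) + k" by (intro exI[of _ "k + q + 1"]) simp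
  qed
  finally show "at_link c f g (cir (- (q + 1))) (cir (- q)) \<tau> \<longleftrightarrow> (\<exists>k::int. \<tau> = y (- q - 1) + real_of_int q + 1 + k)" .
next
  fix q :: int
  have e: "- q - 2 + 1 = - q - 1" "- (q + 1) - 1 = - q - 2" by simp_all
  have "y (- q - 1) < y (- q - 2) + 1" using y_step[of "- q - 2"] unfolding e .
  then show "y (- q - 1) + real_of_int q + 1 < y (- (q + 1) - 1) + real_of_int (q + 1) + 1"
    unfolding e by simp
next
  fix q :: int
  have e: "- q - 2 + 1 = - q - 1" "- (q + 1) - 1 = - q - 2" by simp_all
  have "y (- q - 2) < y (- q - 1)" using y_mono[of "- q - 2"] unfolding e .
  then show "y (- (q + 1) - 1) + real_of_int (q + 1) + 1 < y (- q - 1) + real_of_int q + 1 + 1"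
    unfolding e by simp
next
  show "3 \<le> n" by (rule n_ge)
qed

end

context orient begin

lemma rev_Lab: "orient.Lab (\<lambda>q. cir (- q)) (\<lambda>q. y (- q - 1) + q + 1) i \<tau> \<longleftrightarrow> BLab i \<tau>"
proof -
  interpret R: orient n c r f g "\<lambda>q. cir (- q)" "\<lambda>q. y (- q - 1) + q + 1" by (rule rev_orient)
  show ?thesis
  proof
    assume "R.Lab i \<tau>"
    then obtain q and k :: int where a: "cir (- q) = i" "y (- (q - 1) - 1) + real_of_int (q - 1) + 1 + k \<le> \<tau>"
      "\<tau> < y (- q - 1) + real_of_int q + 1 + k" unfolding R.Lab_def by blast
    have e: "- (q - 1) - 1 = - q" by simp
    show "BLab i \<tau>" unfolding BLab_def
      using a unfolding e by (intro exI[of _ "- q"] exI[of _ "k + q"]) (simp add: algebra_simps)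
  next
    assume "BLab i \<tau>"
    then obtain p and k :: int where a: "cir p = i" "y p + k \<le> \<tau>" "\<tau> < y (p - 1) + 1 + k"
      unfolding BLab_def by blast
    have e: "- (- p - 1) - 1 = p" "- (- p) - 1 = p - 1" by simp_all
    show "R.Lab i \<tau>" unfolding R.Lab_def
      using a by (intro exI[of _ "- p"] exI[of _ "k + p"]) (simp add: algebra_simps e)
  qed
qed

lemma y_shift_const:
  assumes "int n dvd d0"
  shows "y (q + d0) - y q = y (q1 + d0) - y q1"
proof -
  have cir_d: "cir (q + d0) = cir q" for q
    using assms cir_eq by (metis add.commute mod_add_self2 dvd_def mult.commute cir_shift)
  define h where "h q = y (q + d0) - y q" for q
  have hint: "\<exists>k::int. h q = k" for q
  proof -
    obtain j :: int where "y (q + d0) = y q + j" using y_class[of q "q + d0"] cir_d by metis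
    then show ?thesis unfolding h_def by (intro exI[of _ j]) simp
  qed
  have hstep: "h (q + 1) = h q" for q
  proof -
    obtain k1 :: int where k1: "h (q + 1) = k1" using hint by blast
    obtain k2 :: int where k2: "h q = k2" using hint by blast
    have a: "y q < y (q + 1)" "y (q + 1) < y q + 1" by (rule y_mono, rule y_step)
    have b: "y (q + d0) < y (q + d0 + 1)" "y (q + d0 + 1) < y (q + d0) + 1" by (rule y_mono, rule y_step)
    have e: "q + 1 + d0 = q + d0 + 1" by simp
    have "real_of_int (k1 - k2) < 1" "real_of_int (k1 - k2) > -1"
      using a b k1 k2 unfolding h_def e by auto
    then have "k1 = k2" by linarith
    then show ?thesis using k1 k2 by simp
  qed
  have "h q = h q1"
  proof (induction q rule: int_induct[where k = q1])
    case base then show ?case by simp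
  next
    case (step1 i) then show ?case using hstep by simp
  next
    case (step2 i) then show ?case using hstep[of "i - 1"] by simp
  qed
  then show ?thesis unfolding h_def .
qed

lemma determinism:
  fixes m1 m2 :: int
  assumes "cir (Q (- real_of_int m1)) = cir (Q (- real_of_int m2))"
  shows "cir (Q (\<tau> - real_of_int m1)) = cir (Q (\<tau> - real_of_int m2))"
proof -
  define q1 where "q1 = Q (- real_of_int m1)"
  define q2 where "q2 = Q (- real_of_int m2)"
  define d0 where "d0 = q2 - q1"
  have "q1 mod int n = q2 mod int n" using assms cir_eq q1_def q2_def by blast
  then have dv: "int n dvd d0" unfolding d0_def by (metis mod_eq_dvd_iff dvd_minus_iff minus_diff_eq)
  obtain D :: int where D: "y (q1 + d0) = y q1 + D"
    using y_class[of q1 "q1 + d0"] cir_eq dv by (metis (no_types) cir_shift dvd_def)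
  have sh: "y (q + d0) = y q + D" for q using y_shift_const[OF dv, of q q1] D by simp
  have s1: "y (q1 - 1) \<le> - real_of_int m1" "- real_of_int m1 < y q1" using Q_spec q1_def by auto
  have s2: "y (q2 - 1) \<le> - real_of_int m2" "- real_of_int m2 < y q2" using Q_spec q2_def by auto
  have y2: "y q2 = y q1 + D" using sh[of q1] unfolding d0_def by simp
  have e3: "q2 - 1 = (q1 - 1) + d0" unfolding d0_def by simp
  have y21: "y (q2 - 1) = y (q1 - 1) + D" unfolding e3 by (rule sh)
  have s2': "y (q1 - 1) + D \<le> - real_of_int m2" "- real_of_int m2 < y q1 + D"
    using s2 y2 y21 by auto
  have a: "y (q1 - 1) < y q1" "y q1 < y (q1 - 1) + 1" using y_mono[of "q1 - 1"] y_step[of "q1 - 1"] by auto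
  have "real_of_int (m1 - m2 - D) < 1" "real_of_int (m1 - m2 - D) > -1" using s1 s2' a by auto
  then have mm: "m1 = m2 + D" by linarith
  define s where "s = \<tau> - real_of_int m1"
  have "Q (s + D) = Q s + d0"
  proof (rule Q_eq)
    show "y (Q s + d0 - 1) \<le> s + D" using sh[of "Q s - 1"] Q_spec[of s] by (simp add: algebra_simps)
    show "s + D < y (Q s + d0)" using sh[of "Q s"] Q_spec[of s] by simp
  qed
  moreover have "\<tau> - real_of_int m2 = s + D" unfolding s_def using mm by simp
  ultimately have "Q (\<tau> - real_of_int m2) = Q s + d0" by simp
  then show ?thesis unfolding s_def using cir_eq dv
    by (metis cir_shift dvd_def)
qed

end

lemma sched_periodic:
  assumes "g i = 1 \<or> g i = -1"
  shows "sched_pt c f g i (\<tau> + real_of_int j) = sched_pt c f g i \<tau>"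
proof -
  have "cis (f i + g i * (2 * pi * (\<tau> + real_of_int j))) = cis (f i + g i * (2 * pi * \<tau>))"
    unfolding cis_eq_iff
  proof (intro exI[of _ "if g i = 1 then j else - j"])
    show "f i + g i * (2 * pi * (\<tau> + real_of_int j)) = f i + g i * (2 * pi * \<tau>) + 2 * pi * real_of_int (if g i = 1 then j else - j)"
      using assms by (auto simp: algebra_simps)
  qed
  then show ?thesis unfolding sched_pt_def sched_ang_def by simp
qed

lemma sched_time:
  assumes "g i = 1 \<or> g i = -1" "sched_pt c f g i t = sched_pt c f g i \<tau>"
  shows "\<exists>j::int. t = \<tau> + j"
proof -
  have "cis (f i + g i * (2 * pi * t)) = cis (f i + g i * (2 * pi * \<tau>))"
    using assms(2) unfolding sched_pt_def sched_ang_def by simp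
  then obtain k :: int where k: "f i + g i * (2 * pi * t) = f i + g i * (2 * pi * \<tau>) + 2 * pi * k"
    unfolding cis_eq_iff by blast
  then have "2 * pi * (g i * (t - \<tau>)) = 2 * pi * k" by (simp add: algebra_simps)
  then have "g i * (t - \<tau>) = k" using pi_gt_zero by simp
  then have "t - \<tau> = (if g i = 1 then k else - k)" using assms(1) by auto
  then show ?thesis by (intro exI[of _ "if g i = 1 then k else - k"]) auto
qed

lemma sched_disjoint:
  assumes "disjoint_circles n c" "i < n" "j < n" "sched_pt c f g i t = sched_pt c f g j \<tau>"
  shows "i = j"
proof (rule ccontr)
  assume ne: "i \<noteq> j"
  have "c i - c j = sched_ang f g j \<tau> - sched_ang f g i t" using assms(4) unfolding sched_pt_def
    by (simp add: algebra_simps)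
  then have "cmod (c i - c j) \<le> cmod (sched_ang f g j \<tau>) + cmod (sched_ang f g i t)"
    by (metis norm_triangle_ineq4)
  also have "\<dots> = 2" unfolding sched_ang_def by simp
  finally have "dist (c i) (c j) \<le> 2" by (simp add: dist_norm)
  then show False using assms(1-3) ne unfolding disjoint_circles_def by force
qed

lemma others_none:
  assumes run: "run n c r f g s0 P0 pos" and k: "k < n" and P0: "P0 k = None" and t: "\<tau> \<ge> s0"
  shows "pos k \<tau> = None"
proof (rule real_induct[of "\<lambda>\<tau>. pos k \<tau> = None" s0 \<tau>])
  show "pos k s0 = None" using run_start[OF run k] P0 by auto
next
  fix \<tau> :: real assume t: "\<tau> > s0" and IH: "\<And>s. s0 \<le> s \<Longrightarrow> s < \<tau> \<Longrightarrow> pos k s = None"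
  obtain s where s: "s0 < s" "s < \<tau>" "\<forall>k<n. pos k s = left_state pos k \<tau>"
    using ev_happens[OF run_left[OF run t]] by blast
  have "left_state pos k \<tau> = None" using s IH[of s] k by auto
  moreover obtain M where M: "step_ok n c r f g (\<lambda>k. left_state pos k \<tau>) \<tau> M"
    "\<forall>k<n. pos k \<tau> = M k \<or> pos k \<tau> = None" using run_step[OF run t] by blast
  ultimately have "M k = None" using step_none[OF M(1) k] by simp
  then show "pos k \<tau> = None" using M(2) k by auto
next
  fix \<tau> :: real assume t: "\<tau> \<ge> s0" and P: "pos k \<tau> = None"
  show "eventually (\<lambda>\<tau>. pos k \<tau> = None) (at_right \<tau>)"
    using run_right[OF run t] by (rule eventually_mono) (use P k in auto)
qed (rule t)

lemma left_none:
  assumes run: "run n c r f g s0 P0 pos" and k: "k < n" and P0: "P0 k = None" and t: "\<tau> > s0"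
  shows "left_state pos k \<tau> = None"
proof -
  obtain s where s: "s0 < s" "s < \<tau>" "\<forall>k<n. pos k s = left_state pos k \<tau>"
    using ev_happens[OF run_left[OF run t]] by blast
  then show ?thesis using others_none[OF run k P0, of s] k by auto
qed

context orient begin

definition Sset :: "complex set" where
  "Sset = {sched_pt c f g i \<tau> | i \<tau>. i < n \<and> Lab i \<tau>}"

definition Aset :: "complex set" where
  "Aset = closure Sset"

definition Cset :: "complex set" where
  "Cset = (\<Union>q\<in>{0..<int n}. (\<lambda>\<tau>. sched_pt c f g (cir q) \<tau>) ` {y (q - 1)..y q})"

lemma Cset_closed: "closed Cset"
proof -
  have "compact Cset" unfolding Cset_def
  proof (rule compact_UN)
    show "finite {0..<int n}" by simp
    fix q assume "q \<in> {0..<int n}"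
    show "compact ((\<lambda>\<tau>. sched_pt c f g (cir q) \<tau>) ` {y (q - 1)..y q})"
      by (rule compact_continuous_image) (auto simp: sched_pt_def sched_ang_def intro!: continuous_intros)
  qed
  then show ?thesis by (rule compact_imp_closed)
qed

lemma Sset_sub_Cset:
  assumes gpm: "\<And>i. i < n \<Longrightarrow> g i = 1 \<or> g i = -1"
  shows "Sset \<subseteq> Cset"
proof
  fix z assume "z \<in> Sset"
  then obtain i \<tau> where z: "z = sched_pt c f g i \<tau>" "i < n" "Lab i \<tau>" unfolding Sset_def by blast
  obtain q0 where q0: "cir q0 = i" using cir_surj z(2) by blast
  define q where "q = q0 mod int n"
  have "cir q = cir q0" unfolding q_def by (subst cir_eq) simp
  then have cq: "cir q = i" using q0 by simp
  have qr: "q \<in> {0..<int n}" unfolding q_def using n_ge by simp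
  obtain k :: int where k: "y (q - 1) + k \<le> \<tau>" "\<tau> < y q + k" using Lab_at[OF cq] z(3) by blast
  have "z = sched_pt c f g (cir q) (\<tau> + real_of_int (- k))"
    using z(1) sched_periodic[where c=c and f=f and g=g and i=i and \<tau>=\<tau> and j="-k"] gpm[OF z(2)] cq by simp
  moreover have "\<tau> + real_of_int (- k) \<in> {y (q - 1)..y q}" using k by simp
  ultimately show "z \<in> Cset" unfolding Cset_def using qr by blast
qed

lemma Aset_mem:
  assumes disj: "disjoint_circles n c" and gpm: "\<And>i. i < n \<Longrightarrow> g i = 1 \<or> g i = -1"
    and i: "i < n" and nolink: "\<And>j. adj n c r i j \<Longrightarrow> \<not> at_link c f g i j t"
  shows "sched_pt c f g i t \<in> Aset \<longleftrightarrow> Lab i t"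
proof
  assume "Lab i t"
  then have "sched_pt c f g i t \<in> Sset" unfolding Sset_def using i by blast
  then show "sched_pt c f g i t \<in> Aset" unfolding Aset_def using closure_subset by blast
next
  assume "sched_pt c f g i t \<in> Aset"
  moreover have "Aset \<subseteq> Cset" unfolding Aset_def
    by (rule closure_minimal[OF Sset_sub_Cset[OF gpm] Cset_closed])
  ultimately have "sched_pt c f g i t \<in> Cset" by blast
  then obtain q \<tau> where q: "q \<in> {0..<int n}" "\<tau> \<in> {y (q - 1)..y q}"
    "sched_pt c f g i t = sched_pt c f g (cir q) \<tau>" unfolding Cset_def by blast
  have ci: "cir q = i" using sched_disjoint[OF disj i cir_lt q(3)] by simp
  have "sched_pt c f g i t = sched_pt c f g i \<tau>" using q(3) ci by simp
  then obtain j :: int where j: "t = \<tau> + j"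
    using sched_time[where c=c and f=f and g=g and i=i and t=t and \<tau>=\<tau>] gpm[OF i] by blast
  have n1: "\<tau> \<noteq> y q"
  proof
    assume "\<tau> = y q"
    then have "at_link c f g (cir q) (cir (q + 1)) t" using link_fwd j by blast
    moreover have "adj n c r (cir q) (cir (q + 1))" using adj_cir by blast
    ultimately show False using nolink ci by blast
  qed
  have n2: "\<tau> \<noteq> y (q - 1)"
  proof
    assume "\<tau> = y (q - 1)"
    then have "at_link c f g (cir (q - 1 + 1)) (cir (q - 1)) t" using link_bwd j by blast
    then have "at_link c f g (cir q) (cir (q - 1)) t" by simp
    moreover have "adj n c r (cir q) (cir (q - 1))" using adj_cir by blast
    ultimately show False using nolink ci by blast
  qed
  show "Lab i t" unfolding Lab_def using q(2) n1 n2 j ci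
    by (intro exI[of _ q] exI[of _ j]) auto
qed

end

lemma inj_cfg_init: "inj_cfg n (\<lambda>k. Some k)"
  unfolding inj_cfg_def by auto

context orient begin

lemma ring_fwd:
  assumes sync: "sync_schedule n c r f g" and disj: "disjoint_circles n c" and i: "i < n"
    and run: "run n c r f g s (\<lambda>k. if k = i then Some i else None) pos"
    and nn: "\<And>\<tau>. \<tau> \<ge> s \<Longrightarrow> pos i \<tau> \<noteq> None" and lab: "Lab i s"
  shows "closure {sched_pt c f g (the (pos i \<tau>)) \<tau> | \<tau>. \<tau> \<ge> s} = Aset"
proof -
  have gpm: "\<And>i. i < n \<Longrightarrow> g i = 1 \<or> g i = -1" using sync unfolding sync_schedule_def by blast
  obtain q and m :: int where qm: "cir q = i" "y (q - 1) + m \<le> s" "s < y q + m"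
    using lab unfolding Lab_def by blast
  have Qs: "Q (s - real_of_int m) = q" using qm by (intro Q_eq) auto
  have st: "pos i s = Some (cir (Q (s - real_of_int m)))"
    using run_start[OF run i] nn[of s] Qs qm by auto
  have free: "\<not> occupied n (\<lambda>k. left_state pos k \<tau>) j"
    if t: "\<tau> > s" and ls: "left_state pos i \<tau> = Some i'" and ad: "adj n c r i' j" for \<tau> i' j
  proof
    assume "occupied n (\<lambda>k. left_state pos k \<tau>) j"
    then obtain k where k: "k < n" "left_state pos k \<tau> = Some j" unfolding occupied_def by blast
    show False
    proof (cases "k = i")
      case True then show False using k ls ad unfolding adj_def by simp
    next
      case False then show False using left_none[OF run k(1) _ t] k by simp
    qed
  qed
  have pth: "pos i \<tau> = Some (cir (Q (\<tau> - real_of_int m)))" if "\<tau> \<ge> s" for \<tau>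
    by (rule path[OF sync disj run i nn st]) (use free that in auto)
  define T where "T = {sched_pt c f g (the (pos i \<tau>)) \<tau> | \<tau>. \<tau> \<ge> s}"
  have T: "T = {sched_pt c f g (cir (Q (\<tau> - real_of_int m))) \<tau> | \<tau>. \<tau> \<ge> s}"
    unfolding T_def using pth by force
  have TS: "T \<subseteq> Sset" unfolding T Sset_def using Lab_Q cir_lt by blast
  have ST: "Sset \<subseteq> T"
  proof
    fix z assume "z \<in> Sset"
    then obtain i' \<tau> where z: "z = sched_pt c f g i' \<tau>" "i' < n" "Lab i' \<tau>" unfolding Sset_def by blast
    then obtain q' and k' :: int where qk: "cir q' = i'" "y (q' - 1) + k' \<le> \<tau>" "\<tau> < y q' + k'"
      unfolding Lab_def by blast
    obtain J :: nat where J: "y ((q' - 1) + int n * int J) \<ge> s - m" using y_unbounded by blast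
    define q'' where "q'' = q' + int n * int J"
    have cq: "cir q'' = i'" unfolding q''_def using cir_shift qk(1) by simp
    obtain d :: int where d: "y q'' = y q' + d" "y (q'' - 1) = y (q' - 1) + d"
      using y_class2[of q' q''] cq qk(1) by auto
    have e: "q'' - 1 = (q' - 1) + int n * int J" unfolding q''_def by simp
    define \<tau>' where "\<tau>' = \<tau> + real_of_int (d + m - k')"
    have Q': "Q (\<tau>' - real_of_int m) = q''" unfolding \<tau>'_def using qk d by (intro Q_eq) auto
    have "\<tau>' \<ge> s" using J d(2) qk unfolding \<tau>'_def e[symmetric] by simp
    moreover have "sched_pt c f g i' \<tau>' = sched_pt c f g i' \<tau>"
      unfolding \<tau>'_def by (rule sched_periodic) (rule gpm[OF z(2)])
    then have "z = sched_pt c f g (cir (Q (\<tau>' - real_of_int m))) \<tau>'"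
      using Q' cq z(1) by simp
    ultimately show "z \<in> T" unfolding T by blast
  qed
  have "closure T = Aset" unfolding Aset_def
    using closure_mono[OF TS] closure_mono[OF ST] by blast
  then show ?thesis unfolding T_def .
qed

lemma starver_path:
  assumes sync: "sync_schedule n c r f g" and disj: "disjoint_circles n c"
    and ps: "partial_scs n c r f g pos" and k: "k < n" and sv: "starves n c r f g pos k"
    and lab: "Lab k 0"
  shows "\<exists>m::int. \<forall>\<tau>\<ge>0. pos k \<tau> = Some (cir (Q (\<tau> - real_of_int m)))"
proof -
  have run: "run n c r f g 0 (\<lambda>k. Some k) pos" using ps unfolding partial_scs_def .
  obtain q and m :: int where qm: "cir q = k" "y (q - 1) + m \<le> 0" "0 < y q + m"
    using lab unfolding Lab_def by blast
  have Qs: "Q (0 - real_of_int m) = q" using qm by (intro Q_eq) auto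
  have nn: "\<And>\<tau>. \<tau> \<ge> 0 \<Longrightarrow> pos k \<tau> \<noteq> None" using sv unfolding starves_def by blast
  have st: "pos k 0 = Some (cir (Q (0 - real_of_int m)))"
    using run_start[OF run k] nn[of 0] Qs qm by auto
  have free: "\<And>\<tau> i j. \<tau> > 0 \<Longrightarrow> left_state pos k \<tau> = Some i \<Longrightarrow> adj n c r i j \<Longrightarrow>
                  at_link c f g i j \<tau> \<Longrightarrow> \<not> occupied n (\<lambda>k. left_state pos k \<tau>) j"
    using sv unfolding starves_def by blast
  show ?thesis by (intro exI[of _ m] allI impI) (rule path[OF sync disj run k nn st free])
qed

end

context orient begin

lemma Q_cases: "Q x = Qleft x \<or> (Q x = Qleft x + 1 \<and> x = y (Q x - 1))"
  unfolding Qleft_def by auto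

lemma no_meet:
  fixes m1 m2 :: int
  assumes sync: "sync_schedule n c r f g" and disj: "disjoint_circles n c"
    and ps: "partial_scs n c r f g pos" and u: "u < n" and v: "v < n" and uv: "u \<noteq> v"
    and su: "starves n c r f g pos u"
    and pu: "\<And>\<tau>. \<tau> \<ge> 0 \<Longrightarrow> pos u \<tau> = Some (cir (Q (\<tau> - real_of_int m1)))"
    and pv: "\<And>\<tau>. \<tau> \<ge> 0 \<Longrightarrow> pos v \<tau> = Some (cir (- orient.Q (\<lambda>q. y (- q - 1) + q + 1) (\<tau> - real_of_int m2)))"
  shows False
proof -
  interpret R: orient n c r f g "\<lambda>q. cir (- q)" "\<lambda>q. y (- q - 1) + q + 1" by (rule rev_orient)
  have run: "run n c r f g 0 (\<lambda>k. Some k) pos" using ps unfolding partial_scs_def .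
  have inj: "inj_cfg n (\<lambda>k. pos k \<tau>)" if "\<tau> \<ge> 0" for \<tau>
    using run_inj[OF sync disj run inj_cfg_init that] .
  define U where "U \<tau> = Q (\<tau> - real_of_int m1)" for \<tau>
  define V where "V \<tau> = - R.Q (\<tau> - real_of_int m2)" for \<tau>
  have pu': "pos u \<tau> = Some (cir (U \<tau>))" if "\<tau> \<ge> 0" for \<tau> using pu[OF that] U_def by simp
  have pv': "pos v \<tau> = Some (cir (V \<tau>))" if "\<tau> \<ge> 0" for \<tau> using pv[OF that] V_def by simp
  have cu: "cir (U 0) = u" using run_start[OF run u] pu'[of 0] by auto
  have cv: "cir (V 0) = v" using run_start[OF run v] pv'[of 0] by auto
  have n0: "int n > 0" using n_ge by simp
  define D0 where "D0 = (V 0 - U 0) mod int n"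
  have "D0 \<noteq> 0"
  proof
    assume "D0 = 0"
    then have "int n dvd (V 0 - U 0)" unfolding D0_def by (simp add: dvd_eq_mod_eq_0)
    then have "V 0 mod int n = U 0 mod int n" by (simp add: mod_eq_dvd_iff)
    then have "cir (V 0) = cir (U 0)" using cir_eq by blast
    then show False using cu cv uv by simp
  qed
  moreover have "D0 \<ge> 0" unfolding D0_def using n0 by simp
  ultimately have D0pos: "D0 \<ge> 1" by simp
  define Sft where "Sft = U 0 + D0 - V 0"
  have "int n dvd Sft" unfolding Sft_def D0_def
  proof -
    have "int n dvd ((V 0 - U 0) mod int n - (V 0 - U 0))"
      by (simp add: mod_eq_dvd_iff[symmetric])
    then show "int n dvd (U 0 + (V 0 - U 0) mod int n - V 0)" by (simp add: algebra_simps)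
  qed
  then obtain J where J: "Sft = int n * J" by (auto simp: dvd_def)
  have cirS: "cir (x + Sft) = cir x" for x unfolding J by (rule cir_shift)
  define D where "D \<tau> = V \<tau> + Sft - U \<tau>" for \<tau>
  have D0': "D 0 = D0" unfolding D_def Sft_def by simp
  have main: "D \<tau> \<ge> 1" if "\<tau> \<ge> 0" for \<tau>
  proof (rule real_induct[of "\<lambda>\<tau>. D \<tau> \<ge> 1" 0 \<tau>])
    show "D 0 \<ge> 1" using D0' D0pos by simp
  next
    fix \<tau> :: real assume "\<tau> \<ge> 0" and P: "D \<tau> \<ge> 1"
    have "eventually (\<lambda>s. Q (s - real_of_int m1) = Q (\<tau> - real_of_int m1) \<and>
        R.Q (s - real_of_int m2) = R.Q (\<tau> - real_of_int m2)) (at_right \<tau>)"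
      using Q_right R.Q_right by (rule eventually_conj)
    then show "eventually (\<lambda>\<tau>. D \<tau> \<ge> 1) (at_right \<tau>)"
      by (rule eventually_mono) (use P in \<open>auto simp: D_def U_def V_def\<close>)
  next
    fix \<tau> :: real assume t: "\<tau> > 0" and IH: "\<And>s. 0 \<le> s \<Longrightarrow> s < \<tau> \<Longrightarrow> D s \<ge> 1"
    have ev: "eventually (\<lambda>s. ((0 < s \<and> s < \<tau> \<and> (\<forall>k<n. pos k s = left_state pos k \<tau>))
         \<and> Q (s - real_of_int m1) = Qleft (\<tau> - real_of_int m1))
         \<and> R.Q (s - real_of_int m2) = R.Qleft (\<tau> - real_of_int m2)) (at_left \<tau>)"
      by (intro eventually_conj run_left[OF run t] Q_left R.Q_left)
    obtain s where s: "0 < s" "s < \<tau>" "\<forall>k<n. pos k s = left_state pos k \<tau>"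
      "Q (s - real_of_int m1) = Qleft (\<tau> - real_of_int m1)"
      "R.Q (s - real_of_int m2) = R.Qleft (\<tau> - real_of_int m2)"
      using ev_happens[OF ev] by blast
    define UL where "UL = Qleft (\<tau> - real_of_int m1)"
    define VL where "VL = - R.Qleft (\<tau> - real_of_int m2)"
    have Ds: "VL + Sft - UL \<ge> 1" using IH[of s] s unfolding D_def U_def V_def UL_def VL_def by simp
    have Ucase: "U \<tau> = UL \<or> (U \<tau> = UL + 1 \<and> \<tau> - real_of_int m1 = y (U \<tau> - 1))"
      unfolding U_def UL_def using Q_cases by blast
    have Vcase: "V \<tau> = VL \<or> V \<tau> = VL - 1"
      unfolding V_def VL_def using R.Q_cases[of "\<tau> - real_of_int m2"] by auto
    show "D \<tau> \<ge> 1"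
    proof (rule ccontr)
      assume "\<not> D \<tau> \<ge> 1"
      then have Dlt: "D \<tau> \<le> 0" by simp
      have "D \<tau> = 0 \<or> D \<tau> = -1" using Ucase Vcase Ds Dlt unfolding D_def by auto
      then show False
      proof
        assume "D \<tau> = 0"
        then have "U \<tau> = V \<tau> + Sft" unfolding D_def by simp
        then have "cir (U \<tau>) = cir (V \<tau>)" using cirS by simp
        then have "pos u \<tau> = pos v \<tau>" using pu' pv' t by simp
        moreover have "pos u \<tau> \<noteq> None" using pu'[of \<tau>] t by simp
        moreover have "inj_cfg n (\<lambda>k. pos k \<tau>)" using inj[of \<tau>] t by simp
        ultimately show False using u v uv unfolding inj_cfg_def by blast
      next
        assume Dm: "D \<tau> = -1"
        then have hop: "U \<tau> = UL + 1" "\<tau> - real_of_int m1 = y (U \<tau> - 1)" and vl: "VL + Sft - UL = 1"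
          using Ucase Vcase Ds unfolding D_def by auto
        define q where "q = U \<tau>"
        have "\<exists>k::int. \<tau> = y (q - 1) + k" using hop(2) q_def by (intro exI[of _ m1]) simp
        then have "at_link c f g (cir (q - 1)) (cir (q - 1 + 1)) \<tau>" using link_fwd by blast
        then have al: "at_link c f g (cir (q - 1)) (cir q) \<tau>" by simp
        have ad: "adj n c r (cir (q - 1)) (cir q)" using adj_cir[of "q - 1" "cir q"] by simp
        have lu: "left_state pos u \<tau> = Some (cir (q - 1))"
          using s(3) u pu'[of s] s(1) s(4) hop(1) q_def unfolding U_def UL_def by simp
        have "left_state pos v \<tau> = Some (cir VL)"
          using s(3) v pv'[of s] s(1) s(5) unfolding V_def VL_def by simp
        moreover have "cir VL = cir q"
        proof -
          have "VL + Sft = q" using vl hop(1) q_def by simp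
          then show ?thesis using cirS[of VL] by simp
        qed
        ultimately have "occupied n (\<lambda>k. left_state pos k \<tau>) (cir q)"
          unfolding occupied_def using v by auto
        moreover have "\<not> occupied n (\<lambda>k. left_state pos k \<tau>) (cir q)"
          using su t lu ad al unfolding starves_def by blast
        ultimately show False by blast
      qed
    qed
  qed (rule that)
  define \<tau>0 where "\<tau>0 = max 0 (max (y Sft + m1) (y (- 1) + 1 + m2))"
  have "Sft + 1 \<le> Q (\<tau>0 - real_of_int m1)" by (rule Q_ge) (simp add: \<tau>0_def)
  moreover have "0 + 1 \<le> R.Q (\<tau>0 - real_of_int m2)" by (rule R.Q_ge) (simp add: \<tau>0_def)
  ultimately have "D \<tau>0 \<le> -2" unfolding D_def U_def V_def by simp
  moreover have "D \<tau>0 \<ge> 1" by (rule main) (simp add: \<tau>0_def)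
  ultimately show False by simp
qed

end

context orient begin

lemma upper:
  assumes sync: "sync_schedule n c r f g" and disj: "disjoint_circles n c"
    and ps: "partial_scs n c r f g pos" and t: "t \<ge> 0"
  shows "card {k. k < n \<and> starves n c r f g pos k}
           \<le> max (card {i. i < n \<and> Lab i t}) (card {i. i < n \<and> BLab i t})"
proof -
  interpret R: orient n c r f g "\<lambda>q. cir (- q)" "\<lambda>q. y (- q - 1) + q + 1" by (rule rev_orient)
  define S where "S = {k. k < n \<and> starves n c r f g pos k}"
  have run: "run n c r f g 0 (\<lambda>k. Some k) pos" using ps unfolding partial_scs_def .
  have inj: "inj_cfg n (\<lambda>k. pos k t)" using run_inj[OF sync disj run inj_cfg_init t] .
  have fpath: "\<exists>m::int. \<forall>\<tau>\<ge>0. pos k \<tau> = Some (cir (Q (\<tau> - real_of_int m)))"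
    if kS: "k \<in> S" and lk: "Lab k 0" for k
  proof -
    have kn: "k < n" "starves n c r f g pos k" using kS unfolding S_def by auto
    show ?thesis by (rule starver_path[OF sync disj ps kn lk])
  qed
  have bpath: "\<exists>m::int. \<forall>\<tau>\<ge>0. pos k \<tau> = Some (cir (- R.Q (\<tau> - real_of_int m)))"
    if kS: "k \<in> S" and lk: "\<not> Lab k 0" for k
  proof -
    have kn: "k < n" "starves n c r f g pos k" using kS unfolding S_def by auto
    have "BLab k 0" using BLab_iff[OF kn(1)] lk by simp
    then have rl: "R.Lab k 0" using rev_Lab by simp
    show ?thesis by (rule R.starver_path[OF sync disj ps kn rl])
  qed
  have fin: "finite {i. i < n \<and> P i}" for P by simp
  define h where "h k = the (pos k t)" for k
  have injh: "inj_on h S"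
  proof
    fix k1 k2 assume k: "k1 \<in> S" "k2 \<in> S" and e: "h k1 = h k2"
    have nn: "pos k1 t \<noteq> None" "pos k2 t \<noteq> None" using k t unfolding S_def starves_def by auto
    then have "pos k1 t = pos k2 t" using e unfolding h_def by auto
    moreover have "k1 < n" "k2 < n" using k unfolding S_def by auto
    ultimately show "k1 = k2" using inj nn(1) unfolding inj_cfg_def by blast
  qed
  show ?thesis
  proof (cases "\<exists>u\<in>S. Lab u 0")
    case True
    then obtain u where u: "u \<in> S" "Lab u 0" by blast
    have allF: "Lab k 0" if kS: "k \<in> S" for k
    proof (rule ccontr)
      assume nl: "\<not> Lab k 0"
      obtain m1 :: int where m1: "\<forall>\<tau>\<ge>0. pos u \<tau> = Some (cir (Q (\<tau> - real_of_int m1)))" using fpath u by blast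
      obtain m2 :: int where m2: "\<forall>\<tau>\<ge>0. pos k \<tau> = Some (cir (- R.Q (\<tau> - real_of_int m2)))"
        using bpath kS nl by blast
      have uk: "u \<noteq> k" using u nl by auto
      have un: "u < n" "starves n c r f g pos u" using u(1) unfolding S_def by auto
      have kn: "k < n" using kS unfolding S_def by auto
      show False
        by (rule no_meet[OF sync disj ps un(1) kn uk un(2)]) (use m1 m2 in auto)
    qed
    have "h ` S \<subseteq> {i. i < n \<and> Lab i t}"
    proof
      fix z assume "z \<in> h ` S"
      then obtain k where k: "k \<in> S" "z = h k" by blast
      obtain m :: int where "\<forall>\<tau>\<ge>0. pos k \<tau> = Some (cir (Q (\<tau> - real_of_int m)))"
        using fpath[OF k(1) allF[OF k(1)]] by blast
      then have "z = cir (Q (t - real_of_int m))" using k t unfolding h_def by auto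
      then show "z \<in> {i. i < n \<and> Lab i t}" using Lab_Q cir_lt by auto
    qed
    then have "card S \<le> card {i. i < n \<and> Lab i t}" by (rule card_inj_on_le[OF injh]) simp
    then show ?thesis unfolding S_def by simp
  next
    case False
    have "h ` S \<subseteq> {i. i < n \<and> BLab i t}"
    proof
      fix z assume "z \<in> h ` S"
      then obtain k where k: "k \<in> S" "z = h k" by blast
      obtain m :: int where "\<forall>\<tau>\<ge>0. pos k \<tau> = Some (cir (- R.Q (\<tau> - real_of_int m)))"
        using bpath[OF k(1)] k(1) False by blast
      then have "z = cir (- R.Q (t - real_of_int m))" using k t unfolding h_def by auto
      moreover have "R.Lab (cir (- R.Q (t - real_of_int m))) t" using R.Lab_Q by simp
      ultimately show "z \<in> {i. i < n \<and> BLab i t}" using rev_Lab cir_lt by auto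
    qed
    then have "card S \<le> card {i. i < n \<and> BLab i t}" by (rule card_inj_on_le[OF injh]) simp
    then show ?thesis unfolding S_def by simp
  qed
qed

end

context orient begin

lemma Q_nonhop:
  assumes "Q x = Qleft x"
  shows "y (Q x - 1) < x" "x < y (Q x)"
proof -
  have "x \<noteq> y (Q x - 1)" using assms unfolding Qleft_def by auto
  then show "y (Q x - 1) < x" using Q_spec[of x] by auto
  show "x < y (Q x)" using Q_spec[of x] by auto
qed

lemma lower:
  assumes sync: "sync_schedule n c r f g" and disj: "disjoint_circles n c"
  shows "\<exists>pos. partial_scs n c r f g pos \<and>
           card {i. i < n \<and> Lab i t} \<le> card {k. k < n \<and> starves n c r f g pos k}"
proof -
  define K where "K = {k. k < n \<and> Lab k 0}"
  have Kex: "\<exists>m::int. cir (Q (- real_of_int m)) = k" if kK0: "k \<in> K" for k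
  proof -
    obtain q and m :: int where qm: "cir q = k" "y (q - 1) + m \<le> 0" "0 < y q + m"
      using kK0 unfolding K_def Lab_def by blast
    have "Q (- real_of_int m) = q" using qm by (intro Q_eq) auto
    then show ?thesis using qm by blast
  qed
  define M where "M k = (SOME m::int. cir (Q (- real_of_int m)) = k)" for k
  have Mk: "cir (Q (- real_of_int (M k))) = k" if "k \<in> K" for k
    unfolding M_def using someI_ex[OF Kex[OF that]] .
  define pos where "pos k \<tau> = (if k \<in> K then Some (cir (Q (\<tau> - real_of_int (M k)))) else None)" for k \<tau>
  have lsK: "left_state pos k \<tau> = Some (cir (Qleft (\<tau> - real_of_int (M k))))" if "k \<in> K" for k \<tau>
  proof (rule left_state_eq)
    show "eventually (\<lambda>s. pos k s = Some (cir (Qleft (\<tau> - real_of_int (M k))))) (at_left \<tau>)"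
      using Q_left[of "real_of_int (M k)" \<tau>] by (rule eventually_mono) (simp add: pos_def that)
  qed
  have lsN: "left_state pos k \<tau> = None" if "k \<notin> K" for k \<tau>
    by (rule left_state_eq) (simp add: pos_def that)
  have unocc: "\<not> occupied n (\<lambda>k. left_state pos k \<tau>) (cir (Q (\<tau> - real_of_int (M k))))"
    if kK: "k \<in> K" and hop: "\<tau> - real_of_int (M k) = y (Q (\<tau> - real_of_int (M k)) - 1)" for k \<tau>
  proof
    define q where "q = Q (\<tau> - real_of_int (M k))"
    have tq: "\<tau> = y (q - 1) + M k" using hop q_def by simp
    assume "occupied n (\<lambda>k. left_state pos k \<tau>) (cir (Q (\<tau> - real_of_int (M k))))"
    then obtain k2 where k2: "k2 < n" "left_state pos k2 \<tau> = Some (cir q)"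
      unfolding occupied_def q_def by blast
    have k2K: "k2 \<in> K" using k2 lsN by (cases "k2 \<in> K") auto
    have cq: "cir (Qleft (\<tau> - real_of_int (M k2))) = cir q" using k2 lsK[OF k2K] by simp
    have a: "y (q - 1) < y q" "y q < y (q - 1) + 1" using y_mono[of "q-1"] y_step[of "q-1"] by auto
    have lt: "\<tau> - (y (q - 1) - y q + 1) < \<tau>" using a by simp
    have "eventually (\<lambda>s. s \<in> {\<tau> - (y (q - 1) - y q + 1)<..<\<tau>} \<and>
             Q (s - real_of_int (M k2)) = Qleft (\<tau> - real_of_int (M k2))) (at_left \<tau>)"
      by (intro eventually_conj eventually_at_left_real[OF lt] Q_left)
    then obtain s where s: "s \<in> {\<tau> - (y (q - 1) - y q + 1)<..<\<tau>}"
      "Q (s - real_of_int (M k2)) = Qleft (\<tau> - real_of_int (M k2))"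
      using ev_happens by blast
    have "Lab (cir (Q (s - real_of_int (M k2)))) s" by (rule Lab_Q)
    then have "Lab (cir q) s" using s(2) cq by simp
    then obtain k' :: int where k': "y (q - 1) + k' \<le> s" "s < y q + k'" using Lab_at by blast
    have "real_of_int k' < real_of_int (M k)" using k' s(1) tq by simp
    then have "k' \<le> M k - 1" by simp
    then have "real_of_int k' \<le> real_of_int (M k) - 1" by linarith
    then show False using k' s(1) tq by simp
  qed
  have step: "step_ok n c r f g (\<lambda>k. left_state pos k \<tau>) \<tau> (\<lambda>k. pos k \<tau>)" for \<tau>
    unfolding step_ok_def
  proof (intro allI impI conjI)
    fix k assume k: "k < n"
    show "left_state pos k \<tau> = None \<Longrightarrow> pos k \<tau> = None"
      using lsK by (cases "k \<in> K") (auto simp: pos_def)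
    fix i assume li: "left_state pos k \<tau> = Some i"
    have kK: "k \<in> K" using li lsN by (cases "k \<in> K") auto
    define x where "x = \<tau> - real_of_int (M k)"
    have i: "i = cir (Qleft x)" using li lsK[OF kK] x_def by simp
    have pk: "pos k \<tau> = Some (cir (Q x))" using kK x_def by (simp add: pos_def)
    show "if \<exists>j. adj n c r i j \<and> at_link c f g i j \<tau> \<and> \<not> occupied n (\<lambda>k. left_state pos k \<tau>) j
          then \<exists>j. pos k \<tau> = Some j \<and> adj n c r i j \<and> at_link c f g i j \<tau> \<and> \<not> occupied n (\<lambda>k. left_state pos k \<tau>) j
          else pos k \<tau> = Some i"
    proof (cases "Q x = Qleft x")
      case True
      have nl: "\<not> at_link c f g i j \<tau>" if "adj n c r i j" for j
        using no_link_inside[of "Q x" "M k" \<tau> j] Q_nonhop[OF True] that i True x_def by simp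
      then show ?thesis using pk i True by auto
    next
      case False
      then have hop: "Q x = Qleft x + 1" "x = y (Q x - 1)" using Q_cases[of x] by auto
      define q where "q = Q x"
      have i': "i = cir (q - 1)" using i hop(1) q_def by simp
      have "\<exists>k'::int. \<tau> = y (q - 1) + k'" using hop(2) q_def x_def by (intro exI[of _ "M k"]) simp
      then have "at_link c f g (cir (q - 1)) (cir (q - 1 + 1)) \<tau>" using link_fwd by blast
      then have al: "at_link c f g i (cir q) \<tau>" using i' by simp
      have ad: "adj n c r i (cir q)" using adj_cir[of "q - 1" "cir q"] i' by simp
      have nocc: "\<not> occupied n (\<lambda>k. left_state pos k \<tau>) (cir q)"
        using unocc[OF kK] hop(2) q_def x_def by simp
      show ?thesis using al ad nocc pk q_def by auto
    qed
  qed
  have run: "run n c r f g 0 (\<lambda>k. Some k) pos"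
    unfolding run_def
  proof (intro conjI allI impI)
    fix k assume "k < n"
    show "pos k 0 = Some k \<or> pos k 0 = None" using Mk by (auto simp: pos_def)
  next
    fix k :: nat and \<tau> :: real
    show "eventually (\<lambda>s. pos k s = pos k \<tau>) (at_right \<tau>)"
    proof (cases "k \<in> K")
      case True show ?thesis
        using Q_right[of "real_of_int (M k)" \<tau>] by (rule eventually_mono) (simp add: pos_def True)
    next
      case False then show ?thesis by (simp add: pos_def)
    qed
  next
    fix k :: nat and \<tau> :: real
    show "\<exists>v. eventually (\<lambda>s. pos k s = v) (at_left \<tau>)"
    proof (cases "k \<in> K")
      case True
      have "eventually (\<lambda>s. pos k s = Some (cir (Qleft (\<tau> - real_of_int (M k))))) (at_left \<tau>)"
        using Q_left[of "real_of_int (M k)" \<tau>] by (rule eventually_mono) (simp add: pos_def True)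
      then show ?thesis by blast
    next
      case False then show ?thesis by (intro exI[of _ None]) (simp add: pos_def)
    qed
  next
    fix \<tau> :: real
    show "\<exists>M. step_ok n c r f g (\<lambda>k. left_state pos k \<tau>) \<tau> M \<and> (\<forall>k<n. pos k \<tau> = M k \<or> pos k \<tau> = None)"
      using step by blast
  qed
  have ps: "partial_scs n c r f g pos" unfolding partial_scs_def by (rule run)
  have starv: "starves n c r f g pos k" if kK: "k \<in> K" for k
    unfolding starves_def
  proof (intro conjI allI impI)
    fix \<tau> :: real show "pos k \<tau> \<noteq> None" using kK by (simp add: pos_def)
  next
    fix \<tau> :: real and i j
    assume t: "0 < \<tau>" and li: "left_state pos k \<tau> = Some i" and ad: "adj n c r i j" and al: "at_link c f g i j \<tau>"
    define x where "x = \<tau> - real_of_int (M k)"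
    have i: "i = cir (Qleft x)" using li lsK[OF kK] x_def by simp
    show "\<not> occupied n (\<lambda>m. left_state pos m \<tau>) j"
    proof (cases "Q x = Qleft x")
      case True
      then show ?thesis
        using no_link_inside[of "Q x" "M k" \<tau> j] Q_nonhop[OF True] ad al i x_def by simp
    next
      case False
      then have hop: "Q x = Qleft x + 1" "x = y (Q x - 1)" using Q_cases[of x] by auto
      define q where "q = Q x"
      have i': "i = cir (q - 1)" using i hop(1) q_def by simp
      have "\<exists>k'::int. \<tau> = y (q - 1) + k'" using hop(2) q_def x_def by (intro exI[of _ "M k"]) simp
      then have "at_link c f g (cir (q - 1)) (cir (q - 1 + 1)) \<tau>" using link_fwd by blast
      then have al2: "at_link c f g i (cir q) \<tau>" using i' by simp
      have ad2: "adj n c r i (cir q)" using adj_cir[of "q - 1" "cir q"] i' by simp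
      have "j = cir q"
      proof (rule ccontr)
        assume "j \<noteq> cir q"
        then show False using no_double_link[OF sync disj ad2 ad _ al2 al] by blast
      qed
      moreover have "\<not> occupied n (\<lambda>k. left_state pos k \<tau>) (cir q)"
        using unocc[OF kK] hop(2) q_def x_def by simp
      ultimately show ?thesis by simp
    qed
  qed
  have sub1: "{i. i < n \<and> Lab i t} \<subseteq> (\<lambda>k. cir (Q (t - real_of_int (M k)))) ` K"
  proof
    fix i assume "i \<in> {i. i < n \<and> Lab i t}"
    then obtain q and m :: int where qm: "cir q = i" "y (q - 1) + m \<le> t" "t < y q + m"
      unfolding Lab_def by blast
    have Qt: "Q (t - real_of_int m) = q" using qm by (intro Q_eq) auto
    define k0 where "k0 = cir (Q (- real_of_int m))"
    have "Lab (cir (Q (0 - real_of_int m))) 0" by (rule Lab_Q)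
    then have k0K: "k0 \<in> K" unfolding K_def k0_def using cir_lt by simp
    have "cir (Q (- real_of_int (M k0))) = cir (Q (- real_of_int m))" using Mk[OF k0K] k0_def by simp
    then have "cir (Q (t - real_of_int (M k0))) = cir (Q (t - real_of_int m))" by (rule determinism)
    then have "i = cir (Q (t - real_of_int (M k0)))" using Qt qm by simp
    then show "i \<in> (\<lambda>k. cir (Q (t - real_of_int (M k)))) ` K" using k0K by blast
  qed
  have finK: "finite K" unfolding K_def by simp
  have sub2: "K \<subseteq> {k. k < n \<and> starves n c r f g pos k}" using starv K_def by auto
  have "card {i. i < n \<and> Lab i t} \<le> card ((\<lambda>k. cir (Q (t - real_of_int (M k)))) ` K)"
    by (rule card_mono[OF finite_imageI[OF finK] sub1])
  also have "\<dots> \<le> card K" by (rule card_image_le[OF finK])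
  also have "\<dots> \<le> card {k. k < n \<and> starves n c r f g pos k}" by (rule card_mono) (use sub2 in auto)
  finally show ?thesis using ps by blast
qed

end

lemma robots_in_bij:
  assumes bij: "\<And>k. k < n \<Longrightarrow> P k t = Some (h k)" and inj: "inj_on h {..<n}"
    and img: "h ` {..<n} = {..<n}"
  shows "robots_in n c f g P t X = card {i. i < n \<and> sched_pt c f g i t \<in> X}"
proof -
  have "{k. k < n \<and> (\<exists>i. P k t = Some i \<and> sched_pt c f g i t \<in> X)} = {k. k < n \<and> sched_pt c f g (h k) t \<in> X}"
    using bij by auto
  moreover have "h ` {k. k < n \<and> sched_pt c f g (h k) t \<in> X} = {i. i < n \<and> sched_pt c f g i t \<in> X}"
    using img by auto
  moreover have "{k. k < n \<and> sched_pt c f g (h k) t \<in> X} \<subseteq> {..<n}" by blast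
  then have "inj_on h {k. k < n \<and> sched_pt c f g (h k) t \<in> X}"
    using inj_on_subset[OF inj] by blast
  then have "card (h ` {k. k < n \<and> sched_pt c f g (h k) t \<in> X}) = card {k. k < n \<and> sched_pt c f g (h k) t \<in> X}"
    by (rule card_image)
  ultimately have "card {k. k < n \<and> (\<exists>i. P k t = Some i \<and> sched_pt c f g i t \<in> X)}
      = card {i. i < n \<and> sched_pt c f g i t \<in> X}"
    by simp
  then show ?thesis unfolding robots_in_def .
qed

theorem corollary6:
  fixes n :: nat and c :: "nat \<Rightarrow> complex" and r :: real
    and f g :: "nat \<Rightarrow> real" and a b :: "complex set"
    and pos0 :: "nat \<Rightarrow> real \<Rightarrow> nat option" and t :: real
  assumes "r > 0"
    and "disjoint_circles n c"
    and "is_cycle_graph n c r"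
    and "sync_schedule n c r f g"
    and "{R. is_ring n c r f g R} = {a, b}" and "a \<noteq> b"
    and "partial_scs n c r f g pos0"
    and "\<forall>k<n. \<forall>s\<ge>0. pos0 k s \<noteq> None"
    and "t \<ge> 0"
    and "\<forall>k<n. \<forall>i j. pos0 k t = Some i \<longrightarrow> adj n c r i j \<longrightarrow> \<not> at_link c f g i j t"
  shows "starvation_number n c r f g
           = max (robots_in n c f g pos0 t a) (robots_in n c f g pos0 t b)"
proof -
  note disj = assms(2) and cyc = assms(3) and sync = assms(4) and rings = assms(5) and ab = assms(6)
    and ps = assms(7) and nn = assms(8) and t = assms(9) and nl = assms(10)
  obtain cir y where ori: "orient n c r f g cir y" using cycle_orient[OF disj cyc sync] by blast
  interpret O: orient n c r f g cir y by (rule ori)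
  interpret R: orient n c r f g "\<lambda>q. cir (- q)" "\<lambda>q. y (- q - 1) + q + 1" by (rule O.rev_orient)
  have gpm: "\<And>i. i < n \<Longrightarrow> g i = 1 \<or> g i = -1" using sync unfolding sync_schedule_def by blast
  have run0: "run n c r f g 0 (\<lambda>k. Some k) pos0" using ps unfolding partial_scs_def .
  have inj: "inj_cfg n (\<lambda>k. pos0 k t)" using run_inj[OF sync disj run0 inj_cfg_init t] .
  define h where "h k = the (pos0 k t)" for k
  have ph: "pos0 k t = Some (h k)" if "k < n" for k using nn that t unfolding h_def by auto
  have hlt: "h k < n" if "k < n" for k using inj ph[OF that] that unfolding inj_cfg_def by blast
  have injh: "inj_on h {..<n}"
  proof
    fix k1 k2 assume k: "k1 \<in> {..<n}" "k2 \<in> {..<n}" and e: "h k1 = h k2"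
    have eq: "pos0 k1 t = pos0 k2 t" using ph k e by simp
    have k': "k1 < n" "k2 < n" using k by auto
    have nn1: "pos0 k1 t \<noteq> None" using ph[OF k'(1)] by simp
    have "k1 \<noteq> k2 \<longrightarrow> pos0 k1 t \<noteq> None \<longrightarrow> pos0 k1 t \<noteq> pos0 k2 t"
      using inj k' unfolding inj_cfg_def by blast
    then show "k1 = k2" using eq nn1 by blast
  qed
  have img: "h ` {..<n} = {..<n}"
  proof (rule card_subset_eq)
    show "finite {..<n}" by simp
    show "h ` {..<n} \<subseteq> {..<n}" using hlt by auto
    show "card (h ` {..<n}) = card {..<n}" using card_image[OF injh] by simp
  qed
  have nolink: "\<And>j. adj n c r i j \<Longrightarrow> \<not> at_link c f g i j t" if i: "i < n" for i
  proof -
    have "i \<in> h ` {..<n}" using img i by simp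
    then obtain k where k: "k < n" "h k = i" by auto
    then show "\<And>j. adj n c r i j \<Longrightarrow> \<not> at_link c f g i j t" using nl ph[OF k(1)] by auto
  qed
  have ring_cases: "R = O.Aset \<or> R = R.Aset" if rr: "is_ring n c r f g R" for R
  proof -
    obtain i s where i: "i < n" and ex: "\<exists>pos. run n c r f g s (\<lambda>k. if k = i then Some i else None) pos \<and>
               (\<forall>\<tau>\<ge>s. pos i \<tau> \<noteq> None) \<and>
               R = closure {sched_pt c f g (the (pos i \<tau>)) \<tau> | \<tau>. \<tau> \<ge> s}"
      using rr unfolding is_ring_def by blast
    then obtain pos where run: "run n c r f g s (\<lambda>k. if k = i then Some i else None) pos"
      and pnn: "\<forall>\<tau>\<ge>s. pos i \<tau> \<noteq> None"
      and RR: "R = closure {sched_pt c f g (the (pos i \<tau>)) \<tau> | \<tau>. \<tau> \<ge> s}"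
      by blast
    show ?thesis
    proof (cases "O.Lab i s")
      case True
      have "R = O.Aset" unfolding RR by (rule O.ring_fwd[OF sync disj i run _ True]) (use pnn in auto)
      then show ?thesis by blast
    next
      case False
      then have "O.BLab i s" using O.BLab_iff[OF i] by simp
      then have "R.Lab i s" using O.rev_Lab by simp
      then have "R = R.Aset" unfolding RR by (intro R.ring_fwd[OF sync disj i run]) (use pnn in auto)
      then show ?thesis by blast
    qed
  qed
  have ar: "is_ring n c r f g a" "is_ring n c r f g b" using rings by auto
  have abc: "(a = O.Aset \<and> b = R.Aset) \<or> (a = R.Aset \<and> b = O.Aset)"
    using ring_cases[OF ar(1)] ring_cases[OF ar(2)] ab by auto
  define NF where "NF = card {i. i < n \<and> O.Lab i t}"
  define NB where "NB = card {i. i < n \<and> O.BLab i t}"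
  have rF: "robots_in n c f g pos0 t O.Aset = NF"
  proof -
    have "robots_in n c f g pos0 t O.Aset = card {i. i < n \<and> sched_pt c f g i t \<in> O.Aset}"
      by (rule robots_in_bij[where n=n and P=pos0 and t=t and h=h, OF ph injh img])
    also have "{i. i < n \<and> sched_pt c f g i t \<in> O.Aset} = {i. i < n \<and> O.Lab i t}"
      using O.Aset_mem[OF disj gpm _ nolink] by blast
    finally show ?thesis unfolding NF_def .
  qed
  have rB: "robots_in n c f g pos0 t R.Aset = NB"
  proof -
    have "robots_in n c f g pos0 t R.Aset = card {i. i < n \<and> sched_pt c f g i t \<in> R.Aset}"
      by (rule robots_in_bij[where n=n and P=pos0 and t=t and h=h, OF ph injh img])
    also have "{i. i < n \<and> sched_pt c f g i t \<in> R.Aset} = {i. i < n \<and> O.BLab i t}"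
      using R.Aset_mem[OF disj gpm _ nolink] O.rev_Lab by blast
    finally show ?thesis unfolding NB_def .
  qed
  have rhs: "max (robots_in n c f g pos0 t a) (robots_in n c f g pos0 t b) = max NF NB"
    using abc
  proof
    assume "a = O.Aset \<and> b = R.Aset" then show ?thesis using rF rB by simp
  next
    assume "a = R.Aset \<and> b = O.Aset" then show ?thesis using rF rB by (simp add: max.commute)
  qed
  define A where "A = {card {k. k < n \<and> starves n c r f g pos k} | pos. partial_scs n c r f g pos}"
  have finA: "finite A"
  proof (rule finite_subset)
    show "A \<subseteq> {..n}" unfolding A_def
    proof
      fix z assume "z \<in> {card {k. k < n \<and> starves n c r f g pos k} | pos. partial_scs n c r f g pos}"
      then obtain pos where "z = card {k. k < n \<and> starves n c r f g pos k}" by blast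
      moreover have "card {k. k < n \<and> starves n c r f g pos k} \<le> card {..<n}"
        by (rule card_mono) auto
      ultimately show "z \<in> {..n}" by simp
    qed
  qed simp
  have ub: "z \<le> max NF NB" if zA: "z \<in> A" for z
  proof -
    obtain pos where pos: "partial_scs n c r f g pos" "z = card {k. k < n \<and> starves n c r f g pos k}"
      using zA unfolding A_def by blast
    show ?thesis using O.upper[OF sync disj pos(1) t] pos(2) unfolding NF_def NB_def by simp
  qed
  obtain posF where posF: "partial_scs n c r f g posF" "NF \<le> card {k. k < n \<and> starves n c r f g posF k}"
    using O.lower[OF sync disj, of t] unfolding NF_def by blast
  obtain posB where posB: "partial_scs n c r f g posB"
    "card {i. i < n \<and> R.Lab i t} \<le> card {k. k < n \<and> starves n c r f g posB k}"
    using R.lower[OF sync disj, of t] by blast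
  have "{i. i < n \<and> R.Lab i t} = {i. i < n \<and> O.BLab i t}" using O.rev_Lab by blast
  then have posB': "NB \<le> card {k. k < n \<and> starves n c r f g posB k}" using posB(2) unfolding NB_def by simp
  have inF: "card {k. k < n \<and> starves n c r f g posF k} \<in> A" unfolding A_def using posF(1) by blast
  have inB: "card {k. k < n \<and> starves n c r f g posB k} \<in> A" unfolding A_def using posB(1) by blast
  have "Max A \<le> max NF NB" using ub finA inF by (intro Max.boundedI) auto
  moreover have "NF \<le> Max A" using posF(2) Max_ge[OF finA inF] by linarith
  moreover have "NB \<le> Max A" using posB' Max_ge[OF finA inB] by linarith
  ultimately have "Max A = max NF NB" by simp
  then show ?thesis unfolding starvation_number_def A_def[symmetric] rhs .
qed


end
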